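(* Let $K$ be a perfect field, $k\subset K$ a subfield, and $\lambda\in\operatorname{Emb}(K)$ with $|\lambda^G|=n<\infty$. Then the two-sided vector space $V(\lambda)$ is simple and is isomorphic to the simple two-sided vector space $K^n_\phi$ corresponding to $\lambda$. Consequently, the left dimension of $V(\lambda)$ over $K$ is $[K(\lambda):K]$ and the right dimension of $V(\lambda)$ over $K$ is $[K(\lambda):\lambda(K)]$.
   Context: Let $\overline{K}$ be a fixed algebraic closure of $K$. A two-sided vector space is a $K\otimes_k K$-module; left (resp. right) multiplication by $K$ means the action of $K\otimes 1$ (resp. $1\otimes K$). $\operatorname{Emb}(K)$ is the set of $k$-linear field embeddings $K\to\overline{K}$; $G=\operatorname{Aut}(\overline{K}/K)$ acts on it by left composition, with orbits $\lambda^G$. $K(\lambda)\subset\overline{K}$ denotes the composite of $K$ and $\lambda(K)$, and $V(\lambda)$ is the two-sided vector space with underlying set $K(\lambda)$ and action $a\cdot v\cdot b=av\lambda(b)$. For a homomorphism $\phi:K\to M_n(K)$, $K^n_\phi$ denotes the row vectors $K^n$ with left action by scalar multiplication and right action $v\cdot x=v\phi(x)$. The simple two-sided vector space corresponding to $\lambda$ is $K^n_\phi$ where: $\alpha_1,\dots,\alpha_n$ is a basis of $K(\lambda)$ over $K$, $\lambda_i:K\to K$ are defined by $\lambda(x)=\sum_i\lambda_i(x)\alpha_i$, $\beta_{ijk}\in K$ are defined by $\alpha_i\alpha_j=\sum_k\beta_{ijk}\alpha_k$, and $\phi_{ij}(x)=\sum_k\beta_{jki}\lambda_k(x)$. (By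 a known classification, $\lambda^G\mapsto K^n_\phi$ is a bijection between finite $G$-orbits and isomorphism classes of simple two-sided vector spaces of finite left dimension.) *)

theory Defs
  imports "HOL-Computational_Algebra.Polynomial" "HOL-Library.Function_Algebras"
begin

text \<open>Ambient setting: the type 'a (a field) plays the role of the fixed algebraic
closure of K; K and k are subfields given as subsets of 'a.\<close>

definition is_subfield :: "'a::field set \<Rightarrow> bool" where
  "is_subfield F \<longleftrightarrow> 0 \<in> F \<and> 1 \<in> F \<and>
     (\<forall>x\<in>F. \<forall>y\<in>F. x + y \<in> F \<and> x * y \<in> F) \<and>
     (\<forall>x\<in>F. - x \<in> F \<and> inverse x \<in> F)"

definition is_alg_closure_of :: "'a::field set \<Rightarrow> bool" where
  "is_alg_closure_of K \<longleftrightarrow>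
     (\<forall>p::'a poly. degree p > 0 \<longrightarrow> (\<exists>x. poly p x = 0)) \<and>
     (\<forall>x::'a. \<exists>p. p \<noteq> 0 \<and> (\<forall>i. coeff p i \<in> K) \<and> poly p x = 0)"

definition perfect_subfield :: "'a::field set \<Rightarrow> bool" where
  "perfect_subfield K \<longleftrightarrow> is_subfield K \<and>
     (CHAR('a) = 0 \<or> (\<forall>x\<in>K. \<exists>y\<in>K. y ^ CHAR('a) = x))"

text \<open>k-linear field embeddings K \<rightarrow> closure (values outside K irrelevant).\<close>
definition is_emb :: "'a::field set \<Rightarrow> 'a set \<Rightarrow> ('a \<Rightarrow> 'a) \<Rightarrow> bool" where
  "is_emb k K lam \<longleftrightarrow>
     (\<forall>x\<in>K. \<forall>y\<in>K. lam (x + y) = lam x + lam y \<and> lam (x * y) = lam x * lam y) \<and>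
     lam 1 = 1 \<and> (\<forall>c\<in>k. \<forall>x\<in>K. lam (c * x) = c * lam x)"

definition Gal_cl :: "'a::field set \<Rightarrow> ('a \<Rightarrow> 'a) set" where
  "Gal_cl K = {\<sigma>. bij \<sigma> \<and> (\<forall>x y. \<sigma> (x + y) = \<sigma> x + \<sigma> y \<and> \<sigma> (x * y) = \<sigma> x * \<sigma> y)
                  \<and> (\<forall>x\<in>K. \<sigma> x = x)}"

text \<open>The orbit of lam under G (embeddings identified by their restriction to K).\<close>
definition emb_orbit :: "'a::field set \<Rightarrow> ('a \<Rightarrow> 'a) \<Rightarrow> ('a \<Rightarrow> 'a) set" where
  "emb_orbit K lam = {(\<lambda>x. if x \<in> K then \<sigma> (lam x) else undefined) | \<sigma>. \<sigma> \<in> Gal_cl K}"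

definition composite :: "'a::field set \<Rightarrow> ('a \<Rightarrow> 'a) \<Rightarrow> 'a set" where
  "composite K lam = \<Inter>{F. is_subfield F \<and> K \<subseteq> F \<and> lam ` K \<subseteq> F}"

record ('s, 'v) tsvs =
  vcarrier :: "'v set"
  lsmul :: "'s \<Rightarrow> 'v \<Rightarrow> 'v"
  rsmul :: "'v \<Rightarrow> 's \<Rightarrow> 'v"

definition is_tsvs :: "'a::field set \<Rightarrow> 'a set \<Rightarrow> ('a, 'v::ab_group_add) tsvs \<Rightarrow> bool" where
  "is_tsvs k K V \<longleftrightarrow> (let C = vcarrier V in
     0 \<in> C \<and> (\<forall>v\<in>C. \<forall>w\<in>C. v + w \<in> C) \<and> (\<forall>v\<in>C. - v \<in> C) \<and>
     (\<forall>a\<in>K. \<forall>v\<in>C. lsmul V a v \<in> C \<and> rsmul V v a \<in> C) \<and>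
     (\<forall>a\<in>K. \<forall>v\<in>C. \<forall>w\<in>C. lsmul V a (v + w) = lsmul V a v + lsmul V a w \<and>
                          rsmul V (v + w) a = rsmul V v a + rsmul V w a) \<and>
     (\<forall>a\<in>K. \<forall>b\<in>K. \<forall>v\<in>C.
        lsmul V (a + b) v = lsmul V a v + lsmul V b v \<and>
        rsmul V v (a + b) = rsmul V v a + rsmul V v b \<and>
        lsmul V (a * b) v = lsmul V a (lsmul V b v) \<and>
        rsmul V v (a * b) = rsmul V (rsmul V v a) b \<and>
        rsmul V (lsmul V a v) b = lsmul V a (rsmul V v b)) \<and>
     (\<forall>v\<in>C. lsmul V 1 v = v \<and> rsmul V v 1 = v) \<and>
     (\<forall>c\<in>k. \<forall>v\<in>C. lsmul V c v = rsmul V v c))"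

definition is_sub_tsvs :: "'a::field set \<Rightarrow> ('a, 'v::ab_group_add) tsvs \<Rightarrow> 'v set \<Rightarrow> bool" where
  "is_sub_tsvs K V W \<longleftrightarrow> W \<subseteq> vcarrier V \<and> 0 \<in> W \<and> (\<forall>v\<in>W. \<forall>w\<in>W. v + w \<in> W) \<and>
     (\<forall>a\<in>K. \<forall>v\<in>W. lsmul V a v \<in> W \<and> rsmul V v a \<in> W)"

definition simple_tsvs :: "'a::field set \<Rightarrow> 'a set \<Rightarrow> ('a, 'v::ab_group_add) tsvs \<Rightarrow> bool" where
  "simple_tsvs k K V \<longleftrightarrow> is_tsvs k K V \<and> vcarrier V \<noteq> {0} \<and>
     (\<forall>W. is_sub_tsvs K V W \<longrightarrow> W = {0} \<or> W = vcarrier V)"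

definition iso_tsvs :: "'a::field set \<Rightarrow> ('a, 'v::ab_group_add) tsvs \<Rightarrow> ('a, 'w::ab_group_add) tsvs \<Rightarrow> bool" where
  "iso_tsvs K V W \<longleftrightarrow> (\<exists>f. bij_betw f (vcarrier V) (vcarrier W) \<and>
     (\<forall>v\<in>vcarrier V. \<forall>w\<in>vcarrier V. f (v + w) = f v + f w) \<and>
     (\<forall>a\<in>K. \<forall>v\<in>vcarrier V. f (lsmul V a v) = lsmul W a (f v) \<and> f (rsmul V v a) = rsmul W (f v) a))"

definition is_basis :: "'a::field set \<Rightarrow> ('a \<Rightarrow> 'v \<Rightarrow> 'v) \<Rightarrow> 'v::ab_group_add set \<Rightarrow> 'v set \<Rightarrow> bool" where
  "is_basis F smul S B \<longleftrightarrow> finite B \<and> B \<subseteq> S \<and>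
     (\<forall>c. (\<forall>b\<in>B. c b \<in> F) \<longrightarrow> (\<Sum>b\<in>B. smul (c b) b) = 0 \<longrightarrow> (\<forall>b\<in>B. c b = 0)) \<and>
     (\<forall>v\<in>S. \<exists>c. (\<forall>b\<in>B. c b \<in> F) \<and> v = (\<Sum>b\<in>B. smul (c b) b))"

text \<open>Dimension (0 if there is no finite basis; not relevant below).\<close>
definition vs_dim :: "'a::field set \<Rightarrow> ('a \<Rightarrow> 'v \<Rightarrow> 'v) \<Rightarrow> 'v::ab_group_add set \<Rightarrow> nat" where
  "vs_dim F smul S = (if \<exists>B. is_basis F smul S B then card (SOME B. is_basis F smul S B) else 0)"

definition left_dim :: "'a::field set \<Rightarrow> ('a, 'v::ab_group_add) tsvs \<Rightarrow> nat" where
  "left_dim K V = vs_dim K (lsmul V) (vcarrier V)"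

definition right_dim :: "'a::field set \<Rightarrow> ('a, 'v::ab_group_add) tsvs \<Rightarrow> nat" where
  "right_dim K V = vs_dim K (\<lambda>a v. rsmul V v a) (vcarrier V)"

definition field_degree :: "'a::field set \<Rightarrow> 'a set \<Rightarrow> nat" where
  "field_degree E F = vs_dim F (*) E"

definition V_lam :: "'a::field set \<Rightarrow> ('a \<Rightarrow> 'a) \<Rightarrow> ('a, 'a) tsvs" where
  "V_lam K lam = \<lparr>vcarrier = composite K lam, lsmul = (\<lambda>a v. a * v), rsmul = (\<lambda>v b. v * lam b)\<rparr>"

text \<open>K^n_phi: row vectors of length n (indices 0..n-1, zero beyond), left action by scalar
multiplication, right action v.x = v phi(x), where phi i j x is the (i,j) entry of phi(x).\<close>
definition Kn_phi :: "'a::field set \<Rightarrow> nat \<Rightarrow> (nat \<Rightarrow> nat \<Rightarrow> 'a \<Rightarrow> 'a) \<Rightarrow> ('a, nat \<Rightarrow> 'a) tsvs" where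
  "Kn_phi K n phi = \<lparr>vcarrier = {v. (\<forall>i. v i \<in> K) \<and> (\<forall>i\<ge>n. v i = 0)},
     lsmul = (\<lambda>a v i. a * v i),
     rsmul = (\<lambda>v x j. if j < n then (\<Sum>i<n. v i * phi i j x) else 0)\<rparr>"

text \<open>The matrix phi from the data alpha (basis), lam_i (coordinates of lam), beta (structure
constants): phi_ij(x) = sum_k beta_jki lam_k(x).\<close>
definition phi_of :: "nat \<Rightarrow> (nat \<Rightarrow> nat \<Rightarrow> nat \<Rightarrow> 'a::field) \<Rightarrow> (nat \<Rightarrow> 'a \<Rightarrow> 'a) \<Rightarrow> nat \<Rightarrow> nat \<Rightarrow> 'a \<Rightarrow> 'a" where
  "phi_of n beta lc i j x = (\<Sum>k<n. beta j k i * lc k x)"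

end

theory Submission
  imports Defs
begin

section \<open>Subfields\<close>

definition polyF :: "'a::field set \<Rightarrow> 'a poly \<Rightarrow> bool" where
  "polyF F p \<longleftrightarrow> (\<forall>i. coeff p i \<in> F)"

lemma sf_0: "is_subfield F \<Longrightarrow> 0 \<in> F" by (simp add: is_subfield_def)
lemma sf_1: "is_subfield F \<Longrightarrow> 1 \<in> F" by (simp add: is_subfield_def)
lemma sf_add: "is_subfield F \<Longrightarrow> x \<in> F \<Longrightarrow> y \<in> F \<Longrightarrow> x + y \<in> F" by (simp add: is_subfield_def)
lemma sf_mult: "is_subfield F \<Longrightarrow> x \<in> F \<Longrightarrow> y \<in> F \<Longrightarrow> x * y \<in> F" by (simp add: is_subfield_def)
lemma sf_uminus: "is_subfield F \<Longrightarrow> x \<in> F \<Longrightarrow> - x \<in> F" by (simp add: is_subfield_def)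
lemma sf_inverse: "is_subfield F \<Longrightarrow> x \<in> F \<Longrightarrow> inverse x \<in> F" by (simp add: is_subfield_def)
lemma sf_diff: "is_subfield F \<Longrightarrow> x \<in> F \<Longrightarrow> y \<in> F \<Longrightarrow> x - y \<in> F"
  using sf_add[of F x "-y"] sf_uminus[of F y] by simp
lemma sf_divide: "is_subfield F \<Longrightarrow> x \<in> F \<Longrightarrow> y \<in> F \<Longrightarrow> x / y \<in> F"
  by (simp add: divide_inverse sf_mult sf_inverse)
lemma sf_power: "is_subfield F \<Longrightarrow> x \<in> F \<Longrightarrow> x ^ n \<in> F"
  by (induction n) (auto simp: sf_1 sf_mult)
lemma sf_sum: "is_subfield F \<Longrightarrow> (\<And>i. i \<in> A \<Longrightarrow> f i \<in> F) \<Longrightarrow> sum f A \<in> F"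
  by (induction A rule: infinite_finite_induct) (auto simp: sf_0 sf_add)
lemma sf_of_nat: "is_subfield F \<Longrightarrow> of_nat n \<in> F"
  by (induction n) (auto simp: sf_0 sf_1 sf_add)

lemmas sf_closed = sf_0 sf_1 sf_add sf_mult sf_uminus sf_inverse sf_diff sf_divide sf_power sf_of_nat

lemma sf_UNIV: "is_subfield (UNIV :: 'a::field set)"
  by (simp add: is_subfield_def)

lemma sf_Inter: "\<forall>F\<in>\<F>. is_subfield F \<Longrightarrow> is_subfield (\<Inter>\<F>)"
  by (auto simp: is_subfield_def)

section \<open>Polynomials with coefficients in a subfield\<close>

lemma polyF_zero: "is_subfield F \<Longrightarrow> polyF F 0"
  by (simp add: polyF_def sf_0)

lemma polyF_const: "is_subfield F \<Longrightarrow> c \<in> F \<Longrightarrow> polyF F [:c:]"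
  by (simp add: polyF_def coeff_pCons sf_0 split: nat.splits)

lemma polyF_one: "is_subfield F \<Longrightarrow> polyF F 1"
  by (simp add: one_pCons polyF_const sf_1)

lemma polyF_pCons: "is_subfield F \<Longrightarrow> polyF F (pCons a p) \<longleftrightarrow> a \<in> F \<and> polyF F p"
  by (auto simp: polyF_def coeff_pCons split: nat.splits)

lemma polyF_X: "is_subfield F \<Longrightarrow> polyF F [:0, 1:]"
  by (simp add: polyF_pCons polyF_zero sf_0 sf_1)

lemma polyF_add: "is_subfield F \<Longrightarrow> polyF F p \<Longrightarrow> polyF F q \<Longrightarrow> polyF F (p + q)"
  by (simp add: polyF_def sf_add)

lemma polyF_uminus: "is_subfield F \<Longrightarrow> polyF F p \<Longrightarrow> polyF F (- p)"
  by (simp add: polyF_def sf_uminus)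

lemma polyF_diff: "is_subfield F \<Longrightarrow> polyF F p \<Longrightarrow> polyF F q \<Longrightarrow> polyF F (p - q)"
  by (simp add: polyF_def sf_diff)

lemma polyF_mult: "is_subfield F \<Longrightarrow> polyF F p \<Longrightarrow> polyF F q \<Longrightarrow> polyF F (p * q)"
  unfolding polyF_def
  by (intro allI coeff_mult_semiring_closed[of F]) (auto simp: sf_0 sf_add sf_mult)

lemma polyF_smult: "is_subfield F \<Longrightarrow> c \<in> F \<Longrightarrow> polyF F p \<Longrightarrow> polyF F (smult c p)"
  by (simp add: polyF_def sf_mult)

lemma polyF_monom: "is_subfield F \<Longrightarrow> c \<in> F \<Longrightarrow> polyF F (monom c n)"
  by (simp add: polyF_def coeff_monom sf_0)

lemma polyF_power: "is_subfield F \<Longrightarrow> polyF F p \<Longrightarrow> polyF F (p ^ n)"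
  by (induction n) (auto simp: polyF_one polyF_mult)

lemma polyF_mono: "polyF F p \<Longrightarrow> F \<subseteq> E \<Longrightarrow> polyF E p"
  by (auto simp: polyF_def)

lemma poly_in_sf: "is_subfield F \<Longrightarrow> polyF F p \<Longrightarrow> x \<in> F \<Longrightarrow> poly p x \<in> F"
  by (induction p) (auto simp: polyF_pCons sf_add sf_mult sf_0)

lemma polyF_division:
  assumes F: "is_subfield F" and mu: "polyF F mu" "mu \<noteq> 0"
  shows "polyF F g \<Longrightarrow> \<exists>q r. polyF F q \<and> polyF F r \<and> g = mu * q + r \<and> (r = 0 \<or> degree r < degree mu)"
proof (induction "degree g" arbitrary: g rule: less_induct)
  case less
  show ?case
  proof (cases "degree mu = 0")
    case True
    then obtain c where c: "mu = [:c:]" "c \<noteq> 0" using mu(2) by (metis degree_eq_zeroE pCons_0_0)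
    have cF: "c \<in> F" using mu(1) c by (metis coeff_pCons_0 polyF_def)
    have "g = mu * smult (inverse c) g + 0" using c by simp
    moreover have "polyF F (smult (inverse c) g)" using cF less.prems F by (simp add: polyF_smult sf_inverse)
    ultimately show ?thesis using F polyF_zero by blast
  next
    case False
    show ?thesis
    proof (cases "degree g < degree mu")
      case True
      then show ?thesis using less.prems F polyF_zero by (intro exI[of _ 0] exI[of _ g]) auto
    next
      case False2: False
      define c where "c = lead_coeff g / lead_coeff mu"
      define k where "k = degree g - degree mu"
      define g' where "g' = g - monom c k * mu"
      have cF: "c \<in> F" unfolding c_def using less.prems mu(1) F by (simp add: polyF_def sf_divide)
      have pg': "polyF F g'" unfolding g'_def using less.prems mu(1) F cF
        by (simp add: polyF_diff polyF_mult polyF_monom)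
      have dg: "degree g > 0" using False False2 by simp
      have lcmu: "lead_coeff mu \<noteq> 0" using mu(2) by simp
      have deg1: "degree (monom c k * mu) \<le> degree g"
        using degree_mult_le[of "monom c k" mu] degree_monom_le[of c k] False2 unfolding k_def by linarith
      have "degree g' \<le> degree g" unfolding g'_def using deg1 degree_diff_le by blast
      moreover have "coeff g' (degree g) = 0"
      proof -
        have "coeff (monom c k * mu) (degree g) = c * coeff mu (degree g - k)"
          using False2 by (simp add: coeff_monom_mult k_def)
        also have "degree g - k = degree mu" using False2 k_def by simp
        finally show ?thesis unfolding g'_def c_def using lcmu by simp
      qed
      ultimately have "degree g' < degree g"
        using dg by (metis coeff_0_degree_minus_1 degree_0 diff_less less_one nat_less_le order_le_less_trans le_degree
            not_less_eq_eq)
      then obtain q r where qr: "polyF F q" "polyF F r" "g' = mu * q + r" "r = 0 \<or> degree r < degree mu"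
        using less.hyps pg' by blast
      have "g = mu * (q + monom c k) + r" using qr(3) unfolding g'_def by (simp add: algebra_simps)
      moreover have "polyF F (q + monom c k)" using qr(1) cF F by (simp add: polyF_add polyF_monom)
      ultimately show ?thesis using qr by blast
    qed
  qed
qed

lemma minpoly_exists:
  assumes F: "is_subfield F" and alg: "\<exists>p. p \<noteq> 0 \<and> polyF F p \<and> poly p y = 0"
  shows "\<exists>mu. polyF F mu \<and> poly mu y = 0 \<and> lead_coeff mu = 1 \<and>
           (\<forall>g. polyF F g \<longrightarrow> poly g y = 0 \<longrightarrow> (\<exists>q. polyF F q \<and> g = mu * q))"
proof -
  define P where "P d \<longleftrightarrow> (\<exists>p. p \<noteq> 0 \<and> polyF F p \<and> poly p y = 0 \<and> degree p = d)" for d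
  have "\<exists>d. P d" using alg unfolding P_def by blast
  hence "P (LEAST d. P d)" by (rule LeastI_ex)
  then obtain mu0 where mu0: "mu0 \<noteq> 0" "polyF F mu0" "poly mu0 y = 0" "degree mu0 = (LEAST d. P d)"
    unfolding P_def by blast
  have div: "\<exists>q. polyF F q \<and> g = mu0 * q" if g: "polyF F g" "poly g y = 0" for g
  proof -
    obtain q r where qr: "polyF F q" "polyF F r" "g = mu0 * q + r" "r = 0 \<or> degree r < degree mu0"
      using polyF_division[OF F mu0(2,1) g(1)] by blast
    have "poly r y = 0" using qr(3) g(2) mu0(3) by (simp add: algebra_simps)
    have "r = 0"
    proof (rule ccontr)
      assume "r \<noteq> 0"
      hence "P (degree r)" unfolding P_def using qr(2) \<open>poly r y = 0\<close> by blast
      hence "(LEAST d. P d) \<le> degree r" by (rule Least_le)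
      thus False using qr(4) \<open>r \<noteq> 0\<close> mu0(4) by simp
    qed
    thus ?thesis using qr by auto
  qed
  define c where "c = lead_coeff mu0"
  have c0: "c \<noteq> 0" using mu0(1) c_def by simp
  have cF: "c \<in> F" using mu0(2) c_def by (simp add: polyF_def)
  define mu where "mu = smult (inverse c) mu0"
  have "polyF F mu" unfolding mu_def using cF F mu0(2) by (simp add: polyF_smult sf_inverse)
  moreover have "poly mu y = 0" unfolding mu_def using mu0(3) by simp
  moreover have "lead_coeff mu = 1" unfolding mu_def c_def using c0 c_def by simp
  moreover have "\<forall>g. polyF F g \<longrightarrow> poly g y = 0 \<longrightarrow> (\<exists>q. polyF F q \<and> g = mu * q)"
  proof (intro allI impI)
    fix g assume g: "polyF F g" "poly g y = 0"
    obtain q where q: "polyF F q" "g = mu0 * q" using div[OF g] by blast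
    have "g = mu * smult c q" unfolding mu_def using q(2) c0 by (simp add: mult_smult_left mult_smult_right)
    moreover have "polyF F (smult c q)" using q(1) cF F by (simp add: polyF_smult)
    ultimately show "\<exists>q. polyF F q \<and> g = mu * q" by blast
  qed
  ultimately show ?thesis by blast
qed

lemma alg_inverse:
  assumes F: "is_subfield F" and x: "x \<noteq> 0"
  shows "p \<noteq> 0 \<Longrightarrow> polyF F p \<Longrightarrow> poly p x = 0 \<Longrightarrow> \<exists>q. polyF F q \<and> x * poly q x = 1"
proof (induction p rule: pCons_induct)
  case 0
  then show ?case by simp
next
  case (pCons a p)
  have aF: "a \<in> F" and pF: "polyF F p" using pCons.prems(2) F by (auto simp: polyF_pCons)
  show ?case
  proof (cases "a = 0")
    case True
    hence "p \<noteq> 0" using pCons.prems(1) by auto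
    moreover have "poly p x = 0" using pCons.prems(3) True x by simp
    ultimately show ?thesis using pCons.IH pF by blast
  next
    case False
    have "a + x * poly p x = 0" using pCons.prems(3) by simp
    hence "x * poly (smult (- inverse a) p) x = 1" using False
      by (simp add: field_simps) (metis add.commute add_eq_0_iff2 mult.commute)
    moreover have "polyF F (smult (- inverse a) p)" using aF pF F by (simp add: polyF_smult sf_inverse sf_uminus del: smult_minus_left)
    ultimately show ?thesis by blast
  qed
qed

lemma poly_closure:
  assumes F: "is_subfield F" and FS: "F \<subseteq> S"
    and add: "\<And>u v. u \<in> S \<Longrightarrow> v \<in> S \<Longrightarrow> u + v \<in> S"
    and mult: "\<And>u v. u \<in> S \<Longrightarrow> v \<in> S \<Longrightarrow> u * v \<in> S"
    and x: "x \<in> S"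
  shows "polyF F q \<Longrightarrow> poly q x \<in> S"
proof (induction q)
  case 0
  then show ?case using FS sf_0[OF F] by auto
next
  case (pCons a q)
  then show ?case using F FS by (auto simp: polyF_pCons intro!: add mult x)
qed

section \<open>Homomorphisms on a subfield and polynomials\<close>

definition hom_on :: "'a::field set \<Rightarrow> ('a \<Rightarrow> 'b::field) \<Rightarrow> bool" where
  "hom_on F f \<longleftrightarrow> f 0 = 0 \<and> f 1 = 1 \<and> (\<forall>a\<in>F. \<forall>b\<in>F. f (a + b) = f a + f b \<and> f (a * b) = f a * f b)"

lemma hom_add: "hom_on F f \<Longrightarrow> a \<in> F \<Longrightarrow> b \<in> F \<Longrightarrow> f (a + b) = f a + f b"
  by (simp add: hom_on_def)
lemma hom_mult: "hom_on F f \<Longrightarrow> a \<in> F \<Longrightarrow> b \<in> F \<Longrightarrow> f (a * b) = f a * f b"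
  by (simp add: hom_on_def)
lemma hom_0: "hom_on F f \<Longrightarrow> f 0 = 0" by (simp add: hom_on_def)
lemma hom_1: "hom_on F f \<Longrightarrow> f 1 = 1" by (simp add: hom_on_def)
lemma hom_uminus: "is_subfield F \<Longrightarrow> hom_on F f \<Longrightarrow> a \<in> F \<Longrightarrow> f (- a) = - f a"
  using hom_add[of F f a "-a"] hom_0[of F f] sf_uminus[of F a] by (simp add: eq_neg_iff_add_eq_0 add.commute)
lemma hom_diff: "is_subfield F \<Longrightarrow> hom_on F f \<Longrightarrow> a \<in> F \<Longrightarrow> b \<in> F \<Longrightarrow> f (a - b) = f a - f b"
  using hom_add[of F f a "-b"] hom_uminus[of F f b] sf_uminus[of F b] by simp
lemma hom_sum: "is_subfield F \<Longrightarrow> hom_on F f \<Longrightarrow> (\<And>i. i \<in> A \<Longrightarrow> g i \<in> F) \<Longrightarrow> f (sum g A) = (\<Sum>i\<in>A. f (g i))"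
proof (induction A rule: infinite_finite_induct)
  case (insert x A)
  then show ?case by (simp add: hom_add sf_sum)
qed (auto simp: hom_0)
lemma hom_power: "is_subfield F \<Longrightarrow> hom_on F f \<Longrightarrow> a \<in> F \<Longrightarrow> f (a ^ n) = f a ^ n"
  by (induction n) (auto simp: hom_1 hom_mult sf_power)
lemma hom_nonzero: "is_subfield F \<Longrightarrow> hom_on F f \<Longrightarrow> a \<in> F \<Longrightarrow> a \<noteq> 0 \<Longrightarrow> f a \<noteq> 0"
  using hom_mult[of F f a "inverse a"] hom_1[of F f] sf_inverse[of F a] by auto
lemma hom_inj: "is_subfield F \<Longrightarrow> hom_on F f \<Longrightarrow> a \<in> F \<Longrightarrow> b \<in> F \<Longrightarrow> f a = f b \<Longrightarrow> a = b"
  using hom_diff[of F f a b] hom_nonzero[of F f "a - b"] sf_diff[of F a b] by auto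
lemma hom_inverse: "is_subfield F \<Longrightarrow> hom_on F f \<Longrightarrow> a \<in> F \<Longrightarrow> f (inverse a) = inverse (f a)"
  using hom_mult[of F f a "inverse a"] hom_1[of F f] sf_inverse[of F a] hom_0[of F f]
  by (cases "a = 0") (auto intro: inverse_unique[symmetric])

lemma coeff_map_hom: "hom_on F f \<Longrightarrow> coeff (map_poly f p) i = f (coeff p i)"
  by (simp add: coeff_map_poly hom_0)

lemma map_hom_add: "hom_on F f \<Longrightarrow> polyF F p \<Longrightarrow> polyF F q \<Longrightarrow> map_poly f (p + q) = map_poly f p + map_poly f q"
  by (rule poly_eqI) (simp add: coeff_map_hom hom_add polyF_def)

lemma map_hom_diff: "is_subfield F \<Longrightarrow> hom_on F f \<Longrightarrow> polyF F p \<Longrightarrow> polyF F q \<Longrightarrow> map_poly f (p - q) = map_poly f p - map_poly f q"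
  by (rule poly_eqI) (simp add: coeff_map_hom hom_diff polyF_def)

lemma map_hom_mult: "is_subfield F \<Longrightarrow> hom_on F f \<Longrightarrow> polyF F p \<Longrightarrow> polyF F q \<Longrightarrow> map_poly f (p * q) = map_poly f p * map_poly f q"
proof (rule poly_eqI)
  fix n assume F: "is_subfield F" and f: "hom_on F f" and p: "polyF F p" and q: "polyF F q"
  have "coeff (map_poly f (p * q)) n = f (\<Sum>i\<le>n. coeff p i * coeff q (n - i))"
    by (simp add: coeff_map_hom[OF f] coeff_mult)
  also have "\<dots> = (\<Sum>i\<le>n. f (coeff p i) * f (coeff q (n - i)))"
    using p q F f by (simp add: hom_sum hom_mult polyF_def sf_mult)
  also have "\<dots> = coeff (map_poly f p * map_poly f q) n"
    by (simp add: coeff_mult coeff_map_hom[OF f])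
  finally show "coeff (map_poly f (p * q)) n = coeff (map_poly f p * map_poly f q) n" .
qed

lemma map_hom_const: "hom_on F f \<Longrightarrow> map_poly f [:c:] = [:f c:]"
  by (rule poly_eqI) (simp add: coeff_map_hom coeff_pCons hom_0 split: nat.splits)

lemma map_hom_id: "(\<And>a. a \<in> F \<Longrightarrow> f a = a) \<Longrightarrow> hom_on F f \<Longrightarrow> polyF F p \<Longrightarrow> map_poly f p = p"
  by (rule poly_eqI) (simp add: coeff_map_hom polyF_def)

lemma poly_map_hom: "is_subfield F \<Longrightarrow> hom_on F f \<Longrightarrow> x \<in> F \<Longrightarrow> polyF F p \<Longrightarrow> f (poly p x) = poly (map_poly f p) (f x)"
proof (induction p)
  case 0
  then show ?case by (simp add: hom_0)
next
  case (pCons a p)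
  have aF: "a \<in> F" and pF: "polyF F p" using pCons.prems by (auto simp: polyF_pCons)
  have "f (poly (pCons a p) x) = f a + f x * f (poly p x)"
    using pCons.prems aF pF by (simp add: hom_add hom_mult poly_in_sf sf_mult)
  also have "\<dots> = f a + f x * poly (map_poly f p) (f x)" using pCons.IH pCons.prems pF by simp
  also have "map_poly f (pCons a p) = pCons (f a) (map_poly f p)"
    by (rule poly_eqI) (simp add: coeff_map_hom[OF pCons.prems(2)] coeff_pCons split: nat.splits)
  ultimately show ?case by simp
qed

lemma degree_map_hom: "is_subfield F \<Longrightarrow> hom_on F f \<Longrightarrow> polyF F p \<Longrightarrow> degree (map_poly f p) = degree p"
proof (cases "p = 0")
  case False
  assume F: "is_subfield F" and f: "hom_on F f" and p: "polyF F p"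
  have "degree (map_poly f p) \<le> degree p" by (rule map_poly_degree_leq)
  moreover have "coeff (map_poly f p) (degree p) \<noteq> 0"
    using False F f p by (simp add: coeff_map_hom hom_nonzero polyF_def)
  ultimately show ?thesis using le_degree by (metis le_antisym)
qed simp

lemma lead_map_hom: "is_subfield F \<Longrightarrow> hom_on F f \<Longrightarrow> polyF F p \<Longrightarrow> lead_coeff (map_poly f p) = f (lead_coeff p)"
  by (simp add: degree_map_hom coeff_map_hom)

definition pemb :: "'a::field set \<Rightarrow> ('a \<times> 'a) set \<Rightarrow> bool" where
  "pemb K G \<longleftrightarrow> (\<forall>x a b. (x, a) \<in> G \<longrightarrow> (x, b) \<in> G \<longrightarrow> a = b) \<and> is_subfield (Domain G) \<and>
     (\<forall>x\<in>K. (x, x) \<in> G) \<and> (1, 1) \<in> G \<and>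
     (\<forall>x a y b. (x, a) \<in> G \<longrightarrow> (y, b) \<in> G \<longrightarrow> (x + y, a + b) \<in> G \<and> (x * y, a * b) \<in> G)"

definition fG :: "('a \<times> 'a) set \<Rightarrow> 'a \<Rightarrow> 'a" where
  "fG G x = (THE a. (x, a) \<in> G)"

lemma pemb_fG: "pemb K G \<Longrightarrow> (x, a) \<in> G \<Longrightarrow> fG G x = a"
  unfolding fG_def pemb_def by (rule the_equality) auto

lemma pemb_fG_mem: "pemb K G \<Longrightarrow> x \<in> Domain G \<Longrightarrow> (x, fG G x) \<in> G"
proof -
  assume G: "pemb K G" and x: "x \<in> Domain G"
  then obtain a where a: "(x, a) \<in> G" by blast
  thus ?thesis using pemb_fG[OF G a] by simp
qed

lemma pemb_hom:
  assumes K: "is_subfield K" and G: "pemb K G"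
  shows "hom_on (Domain G) (fG G)"
proof -
  have "(0, 0) \<in> G" using G sf_0[OF K] unfolding pemb_def by blast
  hence "fG G 0 = 0" using pemb_fG[OF G] by blast
  moreover have "fG G 1 = 1" using G pemb_fG[OF G] unfolding pemb_def by blast
  moreover have "fG G (a + b) = fG G a + fG G b \<and> fG G (a * b) = fG G a * fG G b"
    if "a \<in> Domain G" "b \<in> Domain G" for a b
  proof -
    have "(a, fG G a) \<in> G" "(b, fG G b) \<in> G" using that pemb_fG_mem[OF G] by auto
    hence "(a + b, fG G a + fG G b) \<in> G" "(a * b, fG G a * fG G b) \<in> G" using G unfolding pemb_def by blast+
    thus ?thesis using pemb_fG[OF G] by blast
  qed
  ultimately show ?thesis unfolding hom_on_def by blast
qed

lemma pemb_K: "pemb K G \<Longrightarrow> x \<in> K \<Longrightarrow> fG G x = x"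
  using pemb_fG unfolding pemb_def by blast

lemma pemb_KD: "pemb K G \<Longrightarrow> K \<subseteq> Domain G"
  unfolding pemb_def by blast

lemma pemb_extend1:
  fixes K :: "'a::field set"
  assumes K: "is_subfield K" and G: "pemb K G"
    and alg: "\<forall>x::'a. \<exists>p. p \<noteq> 0 \<and> polyF K p \<and> poly p x = 0"
    and mu: "polyF (Domain G) mu" "poly mu y = 0"
      "\<forall>g. polyF (Domain G) g \<longrightarrow> poly g y = 0 \<longrightarrow> (\<exists>q. polyF (Domain G) q \<and> g = mu * q)"
    and z: "poly (map_poly (fG G) mu) z = 0"
  shows "\<exists>G'. pemb K G' \<and> G \<subseteq> G' \<and> (y, z) \<in> G'"
proof -
  define D where "D = Domain G"
  define f where "f = fG G"
  have D: "is_subfield D" using G unfolding pemb_def D_def by blast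
  have f: "hom_on D f" unfolding f_def D_def by (rule pemb_hom[OF K G])
  have KD: "K \<subseteq> D" using pemb_KD[OF G] D_def by simp
  have fK: "f x = x" if "x \<in> K" for x using pemb_K[OF G that] f_def by simp
  have mu': "polyF D mu" "\<forall>g. polyF D g \<longrightarrow> poly g y = 0 \<longrightarrow> (\<exists>q. polyF D q \<and> g = mu * q)"
    using mu D_def by auto
  have z': "poly (map_poly f mu) z = 0" using z f_def by simp
  have wd: "poly (map_poly f g) z = poly (map_poly f h) z"
    if g: "polyF D g" and h: "polyF D h" and eq: "poly g y = poly h y" for g h
  proof -
    have "polyF D (g - h)" using g h D by (simp add: polyF_diff)
    moreover have "poly (g - h) y = 0" using eq by simp
    ultimately obtain q where q: "polyF D q" "g - h = mu * q" using mu'(2) by blast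
    have "map_poly f g - map_poly f h = map_poly f (g - h)" using map_hom_diff[OF D f g h] by simp
    also have "\<dots> = map_poly f mu * map_poly f q" using q map_hom_mult[OF D f mu'(1) q(1)] by simp
    finally have "poly (map_poly f g) z - poly (map_poly f h) z = 0"
      using z' by (metis mult_zero_left poly_diff poly_mult)
    thus ?thesis by simp
  qed
  define G' where "G' = {(poly g y, poly (map_poly f g) z) | g. polyF D g}"
  define Dy where "Dy = {poly g y | g. polyF D g}"
  have DomG': "Domain G' = Dy" unfolding G'_def Dy_def by auto
  have Dy_add: "u + v \<in> Dy" if uv: "u \<in> Dy" "v \<in> Dy" for u v
  proof -
    obtain g h where "polyF D g" "polyF D h" "u = poly g y" "v = poly h y" using uv unfolding Dy_def by blast
    thus ?thesis using D unfolding Dy_def by (auto intro!: exI[where x="g + h"] polyF_add)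
  qed
  have Dy_mult: "u * v \<in> Dy" if uv: "u \<in> Dy" "v \<in> Dy" for u v
  proof -
    obtain g h where "polyF D g" "polyF D h" "u = poly g y" "v = poly h y" using uv unfolding Dy_def by blast
    thus ?thesis using D unfolding Dy_def by (auto intro!: exI[where x="g * h"] polyF_mult)
  qed
  have Dy_uminus: "- u \<in> Dy" if uv: "u \<in> Dy" for u
  proof -
    obtain g where "polyF D g" "u = poly g y" using uv unfolding Dy_def by blast
    thus ?thesis using D unfolding Dy_def by (auto intro!: exI[where x="- g"] polyF_uminus)
  qed
  have DDy: "D \<subseteq> Dy"
  proof
    fix a assume "a \<in> D"
    hence "polyF D [:a:]" using D by (simp add: polyF_const)
    moreover have "a = poly [:a:] y" by simp
    ultimately show "a \<in> Dy" unfolding Dy_def by blast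
  qed
  have Dy_inv: "inverse u \<in> Dy" if u: "u \<in> Dy" for u
  proof (cases "u = 0")
    case True
    then show ?thesis using u by simp
  next
    case False
    obtain p where p: "p \<noteq> 0" "polyF K p" "poly p u = 0" using alg by blast
    have "polyF D p" using p(2) KD polyF_mono by blast
    then obtain q where q: "polyF D q" "u * poly q u = 1" using alg_inverse[OF D False p(1)] p(3) by blast
    have "poly q u \<in> Dy" by (rule poly_closure[OF D DDy Dy_add Dy_mult u q(1)])
    moreover have "inverse u = poly q u" using q(2) by (metis inverse_unique)
    ultimately show ?thesis by simp
  qed
  have "0 \<in> Dy" "1 \<in> Dy" using DDy sf_0[OF D] sf_1[OF D] by auto
  hence sfDy: "is_subfield Dy" unfolding is_subfield_def
    using Dy_add Dy_mult Dy_uminus Dy_inv by simp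
  have "pemb K G'"
    unfolding pemb_def
  proof (intro conjI allI impI ballI)
    fix x a b assume "(x, a) \<in> G'" "(x, b) \<in> G'"
    then obtain g h where gh: "polyF D g" "polyF D h" "x = poly g y" "a = poly (map_poly f g) z"
      "x = poly h y" "b = poly (map_poly f h) z" unfolding G'_def by blast
    have "poly g y = poly h y" using gh(3,5) by simp
    thus "a = b" using wd[OF gh(1,2)] gh(4,6) by simp
  next
    show "is_subfield (Domain G')" using sfDy DomG' by simp
  next
    fix x assume "x \<in> K"
    hence "polyF D [:x:]" "map_poly f [:x:] = [:x:]" using KD D fK by (auto simp: polyF_const map_hom_const[OF f])
    moreover have "(x, x) = (poly [:x:] y, poly (map_poly f [:x:]) z)" using \<open>map_poly f [:x:] = [:x:]\<close> by simp
    ultimately show "(x, x) \<in> G'" unfolding G'_def by blast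
  next
    have "polyF D [:1:]" "map_poly f [:1:] = [:1:]" using D hom_1[OF f] by (auto simp: polyF_const sf_1 map_hom_const[OF f])
    moreover have "(1, 1) = (poly [:1:] y, poly (map_poly f [:1:]) z)" using \<open>map_poly f [:1:] = [:1:]\<close> by simp
    ultimately show "(1, 1) \<in> G'" unfolding G'_def by blast
  next
    fix x a y' b assume "(x, a) \<in> G'" "(y', b) \<in> G'"
    then obtain g h where gh: "polyF D g" "polyF D h" "x = poly g y" "a = poly (map_poly f g) z"
      "y' = poly h y" "b = poly (map_poly f h) z" unfolding G'_def by blast
    have "(x + y', a + b) = (poly (g + h) y, poly (map_poly f (g + h)) z)"
      using gh map_hom_add[OF f gh(1,2)] by simp
    moreover have "polyF D (g + h)" using gh D by (simp add: polyF_add)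
    ultimately show "(x + y', a + b) \<in> G'" unfolding G'_def by blast
    have "(x * y', a * b) = (poly (g * h) y, poly (map_poly f (g * h)) z)"
      using gh map_hom_mult[OF D f gh(1,2)] by simp
    moreover have "polyF D (g * h)" using gh D by (simp add: polyF_mult)
    ultimately show "(x * y', a * b) \<in> G'" unfolding G'_def by blast
  qed
  moreover have "G \<subseteq> G'"
  proof
    fix p assume "p \<in> G"
    then obtain x b where p: "p = (x, b)" "(x, b) \<in> G" by (cases p) auto
    hence "x \<in> D" "f x = b" using pemb_fG[OF G] D_def f_def by auto
    hence "polyF D [:x:]" "map_poly f [:x:] = [:b:]" using D by (auto simp: polyF_const map_hom_const[OF f])
    moreover have "(x, b) = (poly [:x:] y, poly (map_poly f [:x:]) z)" using \<open>map_poly f [:x:] = [:b:]\<close> by simp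
    ultimately show "p \<in> G'" unfolding G'_def p by blast
  qed
  moreover have "(y, z) \<in> G'"
  proof -
    have "polyF D [:0, 1:]" using D by (rule polyF_X)
    moreover have "map_poly f [:0, 1:] = [:0, 1:]"
      by (rule poly_eqI) (simp add: coeff_map_hom[OF f] coeff_pCons hom_0[OF f] hom_1[OF f] split: nat.splits)
    moreover have "(y, z) = (poly [:0, 1:] y, poly (map_poly f [:0, 1:]) z)" using calculation(2) by simp
    ultimately show ?thesis unfolding G'_def by blast
  qed
  ultimately show ?thesis by blast
qed

lemma pemb_sv: "pemb K G \<Longrightarrow> (x, a) \<in> G \<Longrightarrow> (x, b) \<in> G \<Longrightarrow> a = b"
  unfolding pemb_def by blast
lemma pemb_sf: "pemb K G \<Longrightarrow> is_subfield (Domain G)"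
  unfolding pemb_def by blast
lemma pemb_Kx: "pemb K G \<Longrightarrow> x \<in> K \<Longrightarrow> (x, x) \<in> G"
  unfolding pemb_def by blast
lemma pemb_11: "pemb K G \<Longrightarrow> (1, 1) \<in> G"
  unfolding pemb_def by blast
lemma pemb_addm: "pemb K G \<Longrightarrow> (x, a) \<in> G \<Longrightarrow> (y, b) \<in> G \<Longrightarrow> (x + y, a + b) \<in> G \<and> (x * y, a * b) \<in> G"
  unfolding pemb_def by blast
lemma pembI:
  assumes "\<And>x a b. (x, a) \<in> G \<Longrightarrow> (x, b) \<in> G \<Longrightarrow> a = b" "is_subfield (Domain G)"
    "\<And>x. x \<in> K \<Longrightarrow> (x, x) \<in> G" "(1, 1) \<in> G"
    "\<And>x a y b. (x, a) \<in> G \<Longrightarrow> (y, b) \<in> G \<Longrightarrow> (x + y, a + b) \<in> G \<and> (x * y, a * b) \<in> G"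
  shows "pemb K G"
  using assms unfolding pemb_def by blast

lemma Gal_cl_I:
  assumes "bij s" "\<And>x y. s (x + y) = s x + s y" "\<And>x y. s (x * y) = s x * s y" "\<And>x. x \<in> K \<Longrightarrow> s x = x"
  shows "s \<in> Gal_cl K"
  using assms unfolding Gal_cl_def by blast

lemma pemb_total:
  fixes K :: "'a::field set"
  assumes K: "is_subfield K"
    and alg: "\<forall>x::'a. \<exists>p. p \<noteq> 0 \<and> polyF K p \<and> poly p x = 0"
    and cl: "\<forall>p::'a poly. degree p > 0 \<longrightarrow> (\<exists>x. poly p x = 0)"
    and G0: "pemb K G0"
  shows "\<exists>s\<in>Gal_cl K. \<forall>x b. (x, b) \<in> G0 \<longrightarrow> s x = b"
proof -
  define A where "A = {G. pemb K G \<and> G0 \<subseteq> G}"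
  have chainU: "\<exists>U\<in>A. \<forall>X\<in>C. X \<subseteq> U" if C: "C \<in> chains A" for C
  proof (cases "C = {}")
    case True
    then show ?thesis using G0 unfolding A_def by auto
  next
    case False
    have CA: "C \<subseteq> A" and ch: "\<And>X Y. X \<in> C \<Longrightarrow> Y \<in> C \<Longrightarrow> X \<subseteq> Y \<or> Y \<subseteq> X"
      using C unfolding chains_def chain_subset_def by auto
    have pC: "pemb K X" if "X \<in> C" for X using CA that unfolding A_def by auto
    have two: "\<exists>Z\<in>C. X \<subseteq> Z \<and> Y \<subseteq> Z" if XY: "X \<in> C" "Y \<in> C" for X Y
    proof (cases "X \<subseteq> Y")
      case True thus ?thesis using XY by blast
    next
      case False hence "Y \<subseteq> X" using ch[OF XY] by blast
      thus ?thesis using XY by blast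
    qed
    obtain X0 where X0: "X0 \<in> C" using False by blast
    have "pemb K (\<Union>C)"
    proof (rule pembI)
      fix x a b assume "(x, a) \<in> \<Union>C" "(x, b) \<in> \<Union>C"
      then obtain X Y where "X \<in> C" "Y \<in> C" "(x, a) \<in> X" "(x, b) \<in> Y" by blast
      then obtain Z where "Z \<in> C" "(x, a) \<in> Z" "(x, b) \<in> Z" using two by blast
      thus "a = b" using pemb_sv[OF pC[OF \<open>Z \<in> C\<close>]] by blast
    next
      have z1: "0 \<in> Domain (\<Union>C)" "1 \<in> Domain (\<Union>C)"
        using pemb_sf[OF pC[OF X0]] X0 sf_0 sf_1 by blast+
      have ui: "- x \<in> Domain (\<Union>C) \<and> inverse x \<in> Domain (\<Union>C)" if xx: "x \<in> Domain (\<Union>C)" for x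
      proof -
        obtain X where X: "X \<in> C" "x \<in> Domain X" using xx by blast
        hence "- x \<in> Domain X" "inverse x \<in> Domain X"
          using pemb_sf[OF pC[OF X(1)]] sf_uminus sf_inverse by blast+
        thus ?thesis using X(1) by blast
      qed
      have am: "x + y \<in> Domain (\<Union>C) \<and> x * y \<in> Domain (\<Union>C)"
        if xx: "x \<in> Domain (\<Union>C)" "y \<in> Domain (\<Union>C)" for x y
      proof -
        obtain X Y where "X \<in> C" "Y \<in> C" "x \<in> Domain X" "y \<in> Domain Y" using xx by blast
        then obtain Z where Z: "Z \<in> C" "x \<in> Domain Z" "y \<in> Domain Z" using two by blast
        have "x + y \<in> Domain Z" "x * y \<in> Domain Z" using pemb_sf[OF pC[OF Z(1)]] Z(2,3) sf_add sf_mult by blast+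
        thus ?thesis using Z(1) by blast
      qed
      show "is_subfield (Domain (\<Union>C))" unfolding is_subfield_def using z1 ui am by simp
    next
      fix x assume "x \<in> K" thus "(x, x) \<in> \<Union>C" using pemb_Kx[OF pC[OF X0]] X0 by blast
    next
      show "(1, 1) \<in> \<Union>C" using pemb_11[OF pC[OF X0]] X0 by blast
    next
      fix x a y b assume "(x, a) \<in> \<Union>C" "(y, b) \<in> \<Union>C"
      then obtain X Y where "X \<in> C" "Y \<in> C" "(x, a) \<in> X" "(y, b) \<in> Y" by blast
      then obtain Z where Z: "Z \<in> C" "(x, a) \<in> Z" "(y, b) \<in> Z" using two by blast
      hence "(x + y, a + b) \<in> Z \<and> (x * y, a * b) \<in> Z" using pemb_addm[OF pC[OF Z(1)]] by blast
      thus "(x + y, a + b) \<in> \<Union>C \<and> (x * y, a * b) \<in> \<Union>C" using Z(1) by blast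
    qed
    moreover have "G0 \<subseteq> \<Union>C" using X0 CA unfolding A_def by blast
    ultimately show ?thesis unfolding A_def by blast
  qed
  have Z: "\<forall>C\<in>chains A. \<exists>U\<in>A. \<forall>X\<in>C. X \<subseteq> U" using chainU by (rule ballI)
  obtain M where M1: "M \<in> A" and M2: "\<forall>X\<in>A. M \<subseteq> X \<longrightarrow> X = M"
    using Zorn_Lemma2[OF Z] by (elim bexE)
  have M: "M \<in> A" "\<And>X. X \<in> A \<Longrightarrow> M \<subseteq> X \<Longrightarrow> X = M" using M1 M2 by blast+
  have pM: "pemb K M" and G0M: "G0 \<subseteq> M" using M(1) unfolding A_def by simp_all
  define D where "D = Domain M"
  define s where "s = fG M"
  have D: "is_subfield D" using pemb_sf[OF pM] D_def by simp
  have KD: "K \<subseteq> D" using pemb_KD[OF pM] D_def by simp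
  have DU: "D = UNIV"
  proof (rule ccontr)
    assume "D \<noteq> UNIV"
    then obtain y where y: "y \<notin> D" by blast
    obtain p where p: "p \<noteq> 0" "polyF K p" "poly p y = 0" using alg by blast
    hence "\<exists>p. p \<noteq> 0 \<and> polyF D p \<and> poly p y = 0" using KD polyF_mono by blast
    then obtain mu where mu: "polyF D mu" "poly mu y = 0" "lead_coeff mu = 1"
      "\<forall>g. polyF D g \<longrightarrow> poly g y = 0 \<longrightarrow> (\<exists>q. polyF D q \<and> g = mu * q)"
      using minpoly_exists[OF D] by blast
    have hs: "hom_on D s" using pemb_hom[OF K pM] D_def s_def by simp
    have "degree mu > 0"
    proof (rule ccontr)
      assume "\<not> degree mu > 0"
      hence "degree mu = 0" by simp
      hence "mu = [:coeff mu 0:]" "coeff mu 0 = 1" using mu(3) degree_0_id[of mu] by auto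
      hence "mu = [:1:]" by simp
      thus False using mu(2) by simp
    qed
    hence "degree (map_poly s mu) > 0" using degree_map_hom[OF D hs mu(1)] by simp
    then obtain z where z: "poly (map_poly s mu) z = 0" using cl by blast
    obtain G' where G': "pemb K G'" "M \<subseteq> G'" "(y, z) \<in> G'"
      using pemb_extend1[OF K pM alg, of mu y z] mu z D_def s_def by auto
    have "G' \<in> A" using G' G0M unfolding A_def by auto
    hence "G' = M" using M(2) G'(2) by blast
    thus False using G'(3) y D_def by auto
  qed
  have hs: "hom_on UNIV s" using pemb_hom[OF K pM] D_def s_def DU by simp
  have sK: "s x = x" if "x \<in> K" for x using pemb_K[OF pM that] s_def by simp
  have hsK: "hom_on K s" using hs unfolding hom_on_def by blast
  have inj: "inj s"
    by (rule injI) (rule hom_inj[OF sf_UNIV hs], auto)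
  have surj: "surj s"
  proof -
    {
      fix w
      obtain p where p: "p \<noteq> 0" "polyF K p" "poly p w = 0" using alg by blast
      define R where "R = {r. poly p r = 0}"
      have fin: "finite R" using poly_roots_finite[OF p(1)] R_def by simp
      have "s ` R \<subseteq> R"
      proof
        fix u assume "u \<in> s ` R"
        then obtain r where r: "r \<in> R" "u = s r" by blast
        have "s (poly p r) = poly (map_poly s p) (s r)"
          using poly_map_hom[OF sf_UNIV hs _ polyF_mono[OF p(2)]] by simp
        also have "map_poly s p = p" using map_hom_id[OF _ hsK p(2)] sK by simp
        finally show "u \<in> R" using r hom_0[OF hs] unfolding R_def by simp
      qed
      moreover have "inj_on s R" using inj inj_on_subset by blast
      ultimately have "s ` R = R" using endo_inj_surj[OF fin] by blast
      moreover have "w \<in> R" using p(3) unfolding R_def by simp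
      ultimately have "w \<in> s ` R" by simp
      hence "w \<in> range s" by blast
    }
    thus ?thesis by blast
  qed
  have bij: "bij s" using inj surj by (simp add: bij_def)
  have "s \<in> Gal_cl K"
    by (rule Gal_cl_I[OF bij]) (simp_all add: hom_add[OF hs] hom_mult[OF hs] sK)
  moreover have "\<forall>x b. (x, b) \<in> G0 \<longrightarrow> s x = b"
  proof (intro allI impI)
    fix x b assume "(x, b) \<in> G0"
    hence "(x, b) \<in> M" using G0M by blast
    thus "s x = b" unfolding s_def by (rule pemb_fG[OF pM])
  qed
  ultimately show ?thesis by blast
qed

lemma coeff_monom_binom:
  fixes a :: "'a::comm_semiring_1"
  assumes "i \<le> e" "p > 0"
  shows "coeff ((monom 1 p + [:a:]) ^ e) (i * p) = of_nat (e choose i) * a ^ (e - i)"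
proof -
  have "coeff ((monom 1 p + [:a:]) ^ e) (i * p) =
      (\<Sum>k\<le>e. coeff (of_nat (e choose k) * monom 1 p ^ k * [:a:] ^ (e - k)) (i * p))"
    by (subst binomial_ring) (simp add: coeff_sum)
  also have "\<dots> = (\<Sum>k\<le>e. (if k = i then of_nat (e choose k) * a ^ (e - k) else 0))"
  proof (intro sum.cong refl)
    fix k assume "k \<in> {..e}"
    have "of_nat (e choose k) * monom 1 p ^ k * [:a:] ^ (e - k) = monom (of_nat (e choose k) * a ^ (e - k)) (p * k)"
    proof -
      have "of_nat (e choose k) * monom 1 p ^ k * [:a:] ^ (e - k) = smult (of_nat (e choose k)) (smult (a ^ (e - k)) (monom 1 (p * k)))"
        by (simp add: of_nat_poly monom_power poly_const_pow mult.commute[of _ "[:_:]"] mult.commute[of "a ^ _"])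
      thus ?thesis by (simp add: smult_monom)
    qed
    thus "coeff (of_nat (e choose k) * monom 1 p ^ k * [:a:] ^ (e - k)) (i * p) =
        (if k = i then of_nat (e choose k) * a ^ (e - k) else 0)"
      using assms(2) by (simp add: coeff_monom mult.commute)
  qed
  also have "\<dots> = of_nat (e choose i) * a ^ (e - i)" using assms(1) by simp
  finally show ?thesis .
qed

lemma linear_power_in_K:
  fixes K :: "'a::field set"
  assumes K: "perfect_subfield K"
  shows "d > 0 \<Longrightarrow> (\<forall>i. coeff ([:-x, 1:] ^ d) i \<in> K) \<Longrightarrow> x \<in> K"
proof (induction d arbitrary: x rule: less_induct)
  case (less d)
  have sK: "is_subfield K" using K unfolding perfect_subfield_def by blast
  have cf: "coeff ([:-x, 1:] ^ d) i = of_nat (d choose i) * (-x) ^ (d - i)" if "i \<le> d" for i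
    using coeff_linear_poly_power[OF that, of "-x" 1] by simp
  show ?case
  proof (cases "of_nat d = (0::'a)")
    case False
    have "d choose (d - 1) = d"
      using binomial_symmetric[of "d - 1" d] less.prems(1) by simp
    hence "coeff ([:-x, 1:] ^ d) (d - 1) = of_nat d * (- x)" using cf[of "d - 1"] less.prems(1) by simp
    hence "of_nat d * (- x) \<in> K" using less.prems(2) by metis
    hence "- (of_nat d * (- x)) / of_nat d \<in> K" using sK sf_divide sf_uminus sf_of_nat by blast
    moreover have "- (of_nat d * (- x)) / of_nat d = x" using False by simp
    ultimately show ?thesis by simp
  next
    case True
    define p where "p = CHAR('a)"
    have "p dvd d" using True of_nat_eq_0_iff_char_dvd p_def by blast
    hence p0: "p > 0" using less.prems(1) by (cases "p = 0") auto
    have pp: "prime p" using prime_CHAR_semidom[where 'a='a] p0 p_def by simp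
    obtain e where e: "d = p * e" using \<open>p dvd d\<close> by blast
    have e0: "e > 0" using e less.prems(1) by (cases "e = 0") auto
    have p2: "p \<ge> 2" using pp prime_ge_2_nat by blast
    have "1 * e < p * e" using e0 p2 by (intro mult_strict_right_mono) auto
    hence ed: "e < d" using e by simp
    define w where "w = (-x) ^ p"
    have fr: "[:-x, 1:] ^ p = monom 1 p + [:w:]"
    proof -
      have "[:-x, 1:] = monom 1 1 + [:-x:]" by (simp add: monom_altdef)
      hence "[:-x, 1:] ^ p = (monom 1 1) ^ p + [:-x:] ^ p"
        using freshmans_dream[where 'a = "'a poly" and x = "monom 1 1" and y = "[:-x:]" and n = p] pp p_def by simp
      thus ?thesis by (simp add: monom_power poly_const_pow w_def)
    qed
    have pw: "[:-x, 1:] ^ d = (monom 1 p + [:w:]) ^ e" using fr e by (simp add: power_mult)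
    have "\<forall>i. coeff ([:-(-w), 1:] ^ e) i \<in> K"
    proof
      fix i
      show "coeff ([:-(-w), 1:] ^ e) i \<in> K"
      proof (cases "i \<le> e")
        case True
        have "coeff ([:-(-w), 1:] ^ e) i = of_nat (e choose i) * w ^ (e - i)"
          using coeff_linear_poly_power[OF True, of w 1] by simp
        also have "\<dots> = coeff ([:-x, 1:] ^ d) (i * p)" using pw coeff_monom_binom[OF True p0, of w] by simp
        finally show ?thesis using less.prems(2) by simp
      next
        case False
        hence "coeff ([:-(-w), 1:] ^ e) i = 0" by (simp add: coeff_eq_0 degree_linear_power)
        thus ?thesis using sf_0[OF sK] by simp
      qed
    qed
    hence "-w \<in> K" using less.IH[OF ed e0] by blast
    hence wK: "w \<in> K" using sf_uminus[OF sK] by fastforce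
    have "CHAR('a) \<noteq> 0" using p0 p_def by simp
    hence "\<forall>x\<in>K. \<exists>y\<in>K. y ^ CHAR('a) = x" using K unfolding perfect_subfield_def by simp
    then obtain y where y: "y \<in> K" "y ^ p = w" using wK unfolding p_def by blast
    have "(y + x) ^ p = y ^ p + x ^ p" using freshmans_dream[where x = y and y = x and n = p] pp p_def by simp
    also have "\<dots> = 0" using y(2) minus_power_prime_CHAR[of p x] pp p_def w_def by simp
    finally have "y + x = 0" by simp
    hence "x = - y" by (simp add: eq_neg_iff_add_eq_0 add.commute)
    thus ?thesis using y(1) sf_uminus[OF sK] by simp
  qed
qed

lemma all_roots_eq:
  fixes x :: "'a::field"
  assumes cl: "\<forall>p::'a poly. degree p > 0 \<longrightarrow> (\<exists>x. poly p x = 0)"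
  shows "lead_coeff p = 1 \<Longrightarrow> (\<forall>z. poly p z = 0 \<longrightarrow> z = x) \<Longrightarrow> p = [:-x, 1:] ^ degree p"
proof (induction "degree p" arbitrary: p)
  case 0
  hence "p = [:coeff p 0:]" "coeff p 0 = 1" using degree_0_id[of p] by auto
  then show ?case using 0 by (simp add: one_pCons)
next
  case (Suc n)
  then obtain r where "poly p r = 0" using cl by (metis zero_less_Suc)
  hence "r = x" using Suc.prems by blast
  hence "[:-x, 1:] dvd p" using \<open>poly p r = 0\<close> poly_eq_0_iff_dvd by blast
  then obtain q where q: "p = [:-x, 1:] * q" by blast
  have q0: "q \<noteq> 0" using q Suc.prems(1) by auto
  have "degree ([:-x, 1:] * q) = degree [:-x, 1:] + degree q" by (rule degree_mult_eq) (auto simp: q0)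
  hence dq: "degree q = n" using q Suc.hyps(2) by simp
  have "lead_coeff ([:-x, 1:] * q) = lead_coeff [:-x, 1:] * lead_coeff q" by (rule lead_coeff_mult)
  hence lq: "lead_coeff q = 1" using q Suc.prems(1) by simp
  have rq: "\<forall>z. poly q z = 0 \<longrightarrow> z = x" using Suc.prems(2) q by simp
  have "q = [:-x, 1:] ^ n" using Suc.hyps(1)[OF dq[symmetric] lq rq] dq by simp
  hence "p = [:-x, 1:] ^ Suc n" using q by (simp only: power_Suc)
  thus ?case using Suc.hyps(2) by simp
qed

lemma alg_closure_facts:
  assumes "is_alg_closure_of K"
  shows "\<forall>p::'a::field poly. degree p > 0 \<longrightarrow> (\<exists>x. poly p x = 0)"
    and "\<forall>x::'a. \<exists>p. p \<noteq> 0 \<and> polyF K p \<and> poly p x = 0"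
  using assms unfolding is_alg_closure_of_def polyF_def by auto

lemma Gal_fix:
  fixes K :: "'a::field set"
  assumes AC: "is_alg_closure_of K" and P: "perfect_subfield K" and x: "x \<notin> K"
  shows "\<exists>s\<in>Gal_cl K. s x \<noteq> x"
proof -
  have K: "is_subfield K" using P unfolding perfect_subfield_def by blast
  note cl = alg_closure_facts(1)[OF AC] and alg = alg_closure_facts(2)[OF AC]
  define G0 where "G0 = {(a, a) | a. a \<in> K}"
  have DG0: "Domain G0 = K" unfolding G0_def by auto
  have pG0: "pemb K G0"
  proof (rule pembI)
    fix x a b assume "(x, a) \<in> G0" "(x, b) \<in> G0" thus "a = b" unfolding G0_def by auto
  next
    show "is_subfield (Domain G0)" using DG0 K by simp
  next
    fix x assume "x \<in> K" thus "(x, x) \<in> G0" unfolding G0_def by auto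
  next
    show "(1, 1) \<in> G0" unfolding G0_def using sf_1[OF K] by auto
  next
    fix x a y b assume "(x, a) \<in> G0" "(y, b) \<in> G0"
    hence "a = x" "b = y" "x \<in> K" "y \<in> K" unfolding G0_def by auto
    thus "(x + y, a + b) \<in> G0 \<and> (x * y, a * b) \<in> G0" unfolding G0_def using sf_add[OF K] sf_mult[OF K] by auto
  qed
  have fG0: "fG G0 a = a" if aK: "a \<in> K" for a
  proof -
    have "(a, a) \<in> G0" using aK unfolding G0_def by auto
    thus ?thesis by (rule pemb_fG[OF pG0])
  qed
  have hG0: "hom_on K (fG G0)" using pemb_hom[OF K pG0] DG0 by simp
  obtain p where "p \<noteq> 0" "polyF K p" "poly p x = 0" using alg by blast
  then obtain mu where mu: "polyF K mu" "poly mu x = 0" "lead_coeff mu = 1"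
      "\<forall>g. polyF K g \<longrightarrow> poly g x = 0 \<longrightarrow> (\<exists>q. polyF K q \<and> g = mu * q)"
    using minpoly_exists[OF K] by blast
  have "\<exists>z. poly mu z = 0 \<and> z \<noteq> x"
  proof (rule ccontr)
    assume "\<not> ?thesis"
    hence "\<forall>z. poly mu z = 0 \<longrightarrow> z = x" by blast
    hence eq: "mu = [:-x, 1:] ^ degree mu" using all_roots_eq[OF cl mu(3)] by blast
    have "degree mu > 0"
    proof (rule ccontr)
      assume "\<not> degree mu > 0"
      hence "degree mu = 0" by simp
      hence "mu = [:coeff mu 0:]" "coeff mu 0 = 1" using mu(3) degree_0_id[of mu] by auto
      hence "mu = [:1:]" by simp
      thus False using mu(2) by simp
    qed
    moreover have "polyF K ([:-x, 1:] ^ degree mu)" using mu(1) eq by simp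
    hence "\<forall>i. coeff ([:-x, 1:] ^ degree mu) i \<in> K" unfolding polyF_def by blast
    ultimately have "x \<in> K" using linear_power_in_K[OF P] by blast
    thus False using x by simp
  qed
  then obtain z where z: "poly mu z = 0" "z \<noteq> x" by blast
  have "map_poly (fG G0) mu = mu" using map_hom_id[OF fG0 hG0 mu(1)] by simp
  hence "poly (map_poly (fG G0) mu) z = 0" using z by simp
  moreover have "polyF (Domain G0) mu" "poly mu x = 0"
      "\<forall>g. polyF (Domain G0) g \<longrightarrow> poly g x = 0 \<longrightarrow> (\<exists>q. polyF (Domain G0) q \<and> g = mu * q)"
    using mu unfolding DG0 by auto
  ultimately obtain G' where G': "pemb K G'" "G0 \<subseteq> G'" "(x, z) \<in> G'"
    using pemb_extend1[OF K pG0 alg] by blast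
  then obtain s where s: "s \<in> Gal_cl K" "\<forall>a b. (a, b) \<in> G' \<longrightarrow> s a = b"
    using pemb_total[OF K alg cl G'(1)] by blast
  have "s x = z" using s(2) G'(3) by blast
  thus ?thesis using s(1) z(2) by blast
qed

section \<open>The Galois group\<close>

lemma GalD:
  assumes "s \<in> Gal_cl K"
  shows "bij s" "s (x + y) = s x + s y" "s (x * y) = s x * s y" "x \<in> K \<Longrightarrow> s x = x"
proof -
  have A: "bij s \<and> (\<forall>x y. s (x + y) = s x + s y \<and> s (x * y) = s x * s y) \<and> (\<forall>x\<in>K. s x = x)"
    using assms by (simp add: Gal_cl_def)
  show "bij s" using A by (rule conjunct1)
  show "s (x + y) = s x + s y" using A by simp
  show "s (x * y) = s x * s y" using A by simp
  show "x \<in> K \<Longrightarrow> s x = x" using A by simp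
qed

lemma Gal_hom:
  assumes S: "s \<in> Gal_cl K"
  shows "hom_on UNIV s"
proof -
  note b = GalD(1)[OF S] and a = GalD(2)[OF S] and m = GalD(3)[OF S]
  have "s 0 + s 0 = s 0 + 0" using a[of 0 0] by simp
  hence s0: "s 0 = 0" by (rule add_left_imp_eq)
  have inj: "inj s" using b by (rule bij_is_inj)
  have "s 1 \<noteq> 0"
  proof
    assume "s 1 = 0"
    hence "s 1 = s 0" using s0 by simp
    hence "(1::'a) = 0" using inj by (simp add: inj_eq)
    thus False by simp
  qed
  moreover have "s 1 * (s 1 - 1) = 0" using m[of 1 1] by (simp add: algebra_simps)
  ultimately have "s 1 = 1" by simp
  thus ?thesis unfolding hom_on_def using s0 a m by simp
qed

lemma Gal_fixK: "s \<in> Gal_cl K \<Longrightarrow> x \<in> K \<Longrightarrow> s x = x"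
  by (rule GalD(4))

lemma Gal_id: "id \<in> Gal_cl K"
  unfolding Gal_cl_def by simp

lemma Gal_inv:
  assumes S: "s \<in> Gal_cl K"
  shows "inv s \<in> Gal_cl K"
proof -
  note b = GalD(1)[OF S] and a = GalD(2)[OF S] and m = GalD(3)[OF S] and k = GalD(4)[OF S]
  have si: "s (inv s x) = x" for x using b by (simp add: bij_def surj_f_inv_f)
  have is_: "inv s (s x) = x" for x using b by (simp add: bij_def inv_f_f)
  have 1: "bij (inv s)" using b by (rule bij_imp_bij_inv)
  have 2: "inv s (x + y) = inv s x + inv s y \<and> inv s (x * y) = inv s x * inv s y" for x y
  proof -
    have "s (inv s x + inv s y) = x + y" by (simp add: a si)
    hence e1: "inv s (x + y) = inv s x + inv s y" using is_[of "inv s x + inv s y"] by simp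
    have "s (inv s x * inv s y) = x * y" by (simp add: m si)
    hence e2: "inv s (x * y) = inv s x * inv s y" using is_[of "inv s x * inv s y"] by simp
    show ?thesis using e1 e2 by simp
  qed
  have 3: "inv s x = x" if xK: "x \<in> K" for x
  proof -
    have "s x = x" using xK by (rule k)
    thus ?thesis using is_[of x] by simp
  qed
  show ?thesis unfolding Gal_cl_def using 1 2 3 by simp
qed

lemma Gal_inv_app: "s \<in> Gal_cl K \<Longrightarrow> s (inv s x) = x"
  using GalD(1)[of s K] by (simp add: bij_def surj_f_inv_f)

lemma Gal_sum: "s \<in> Gal_cl K \<Longrightarrow> s (sum f A) = (\<Sum>i\<in>A. s (f i))"
  by (rule hom_sum[OF sf_UNIV Gal_hom]) auto

lemma Gal_mult: "s \<in> Gal_cl K \<Longrightarrow> s (a * b) = s a * s b"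
  by (rule GalD(3))

lemma Gal_add: "s \<in> Gal_cl K \<Longrightarrow> s (a + b) = s a + s b"
  by (rule GalD(2))

lemma descent:
  fixes K :: "'a::field set" and S :: "(nat \<Rightarrow> 'a) set"
  assumes fixK: "\<And>x. (\<forall>s\<in>Gal_cl K. s x = x) \<Longrightarrow> x \<in> K"
    and closed: "\<And>r s. r \<in> S \<Longrightarrow> s \<in> Gal_cl K \<Longrightarrow> (\<lambda>j. s (r j)) \<in> S"
    and Ksol: "\<And>c. (\<forall>j<m. c j \<in> K) \<Longrightarrow> (\<forall>r\<in>S. (\<Sum>j<m. c j * r j) = 0) \<Longrightarrow> (\<forall>j<m. c j = 0)"
  shows "(\<forall>r\<in>S. (\<Sum>j<m. c j * r j) = 0) \<Longrightarrow> \<forall>j<m. c j = 0"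
proof (induction "card {j. j < m \<and> c j \<noteq> 0}" arbitrary: c rule: less_induct)
  case less
  show ?case
  proof (rule ccontr)
    assume "\<not> (\<forall>j<m. c j = 0)"
    then obtain j0 where j0: "j0 < m" "c j0 \<noteq> 0" by blast
    define c' where "c' j = c j / c j0" for j
    have sol': "\<forall>r\<in>S. (\<Sum>j<m. c' j * r j) = 0"
    proof
      fix r assume "r \<in> S"
      hence "(\<Sum>j<m. c j * r j) = 0" using less.prems by blast
      hence "(\<Sum>j<m. c j * r j) / c j0 = 0" by simp
      thus "(\<Sum>j<m. c' j * r j) = 0" unfolding c'_def by (simp add: sum_divide_distrib)
    qed
    have c'1: "c' j0 = 1" using j0 c'_def by simp
    have supp: "{j. j < m \<and> c' j \<noteq> 0} = {j. j < m \<and> c j \<noteq> 0}" using j0(2) c'_def by auto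
    show False
    proof (cases "\<forall>j<m. c' j \<in> K")
      case True
      hence "c' j0 = 0" using Ksol[OF True sol'] j0(1) by blast
      thus False using c'1 by simp
    next
      case False
      then obtain j1 where j1: "j1 < m" "c' j1 \<notin> K" by blast
      then obtain s where s: "s \<in> Gal_cl K" "s (c' j1) \<noteq> c' j1" using fixK by blast
      have hs: "hom_on UNIV s" using Gal_hom[OF s(1)] .
      define d where "d j = s (c' j) - c' j" for j
      have sold: "\<forall>r\<in>S. (\<Sum>j<m. d j * r j) = 0"
      proof
        fix r assume r: "r \<in> S"
        have r': "(\<lambda>j. inv s (r j)) \<in> S" using closed[OF r Gal_inv[OF s(1)]] .
        have "(\<Sum>j<m. s (c' j) * r j) = s (\<Sum>j<m. c' j * inv s (r j))"
          by (simp add: Gal_sum[OF s(1)] Gal_mult[OF s(1)] Gal_inv_app[OF s(1)])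
        also have "(\<Sum>j<m. c' j * inv s (r j)) = 0" using bspec[OF sol' r'] by simp
        finally have e1: "(\<Sum>j<m. s (c' j) * r j) = 0" using hom_0[OF hs] by simp
        have e2: "(\<Sum>j<m. c' j * r j) = 0" using sol' r by blast
        show "(\<Sum>j<m. d j * r j) = 0" unfolding d_def
          using e1 e2 by (simp add: algebra_simps sum_subtractf)
      qed
      have sub: "{j. j < m \<and> d j \<noteq> 0} \<subseteq> {j. j < m \<and> c j \<noteq> 0} - {j0}"
      proof
        fix j assume "j \<in> {j. j < m \<and> d j \<noteq> 0}"
        hence jj: "j < m" "d j \<noteq> 0" by auto
        have "j \<noteq> j0" using jj(2) c'1 hom_1[OF hs] d_def by auto
        moreover have "c' j \<noteq> 0" using jj(2) hom_0[OF hs] d_def by auto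
        ultimately show "j \<in> {j. j < m \<and> c j \<noteq> 0} - {j0}" using jj(1) supp by auto
      qed
      have "card {j. j < m \<and> d j \<noteq> 0} < card {j. j < m \<and> c j \<noteq> 0}"
      proof -
        have "card {j. j < m \<and> d j \<noteq> 0} \<le> card ({j. j < m \<and> c j \<noteq> 0} - {j0})"
          by (rule card_mono) (use sub in auto)
        also have "\<dots> < card {j. j < m \<and> c j \<noteq> 0}"
          by (rule card_Diff1_less) (use j0 in auto)
        finally show ?thesis .
      qed
      hence "\<forall>j<m. d j = 0" using less.hyps sold by blast
      hence "d j1 = 0" using j1(1) by blast
      thus False using s(2) d_def by simp
    qed
  qed
qed

lemma dedekind:
  fixes L :: "'a::field set" and tau :: "'i \<Rightarrow> 'a \<Rightarrow> 'a"
  assumes fin: "finite I"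
    and mult: "\<And>i x y. i \<in> I \<Longrightarrow> x \<in> L \<Longrightarrow> y \<in> L \<Longrightarrow> tau i (x * y) = tau i x * tau i y"
    and one: "\<And>i. i \<in> I \<Longrightarrow> tau i 1 = 1" and L1: "1 \<in> L"
    and Lm: "\<And>x y. x \<in> L \<Longrightarrow> y \<in> L \<Longrightarrow> x * y \<in> L"
    and dist: "\<And>i j. i \<in> I \<Longrightarrow> j \<in> I \<Longrightarrow> i \<noteq> j \<Longrightarrow> \<exists>x\<in>L. tau i x \<noteq> tau j x"
  shows "(\<forall>x\<in>L. (\<Sum>i\<in>I. c i * tau i x) = 0) \<Longrightarrow> \<forall>i\<in>I. c i = 0"
proof (induction "card {i\<in>I. c i \<noteq> 0}" arbitrary: c rule: less_induct)
  case less
  show ?case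
  proof (rule ccontr)
    assume "\<not> (\<forall>i\<in>I. c i = 0)"
    then obtain i0 where i0: "i0 \<in> I" "c i0 \<noteq> 0" by blast
    show False
    proof (cases "\<exists>j0\<in>I. j0 \<noteq> i0 \<and> c j0 \<noteq> 0")
      case False
      have "(\<Sum>i\<in>I. c i * tau i 1) = 0" using less.prems L1 by blast
      moreover have "(\<Sum>i\<in>I. c i * tau i 1) = c i0 * tau i0 1"
        by (rule sum.remove[OF fin i0(1), THEN trans]) (use False in \<open>auto intro!: sum.neutral\<close>)
      ultimately show False using one[OF i0(1)] i0(2) by simp
    next
      case True
      then obtain j0 where j0: "j0 \<in> I" "j0 \<noteq> i0" "c j0 \<noteq> 0" by blast
      obtain x0 where x0: "x0 \<in> L" "tau j0 x0 \<noteq> tau i0 x0" using dist[OF j0(1) i0(1) j0(2)] by blast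
      define d where "d i = c i * (tau i x0 - tau i0 x0)" for i
      have sold: "\<forall>x\<in>L. (\<Sum>i\<in>I. d i * tau i x) = 0"
      proof
        fix x assume x: "x \<in> L"
        have e1: "(\<Sum>i\<in>I. c i * tau i (x0 * x)) = 0" using less.prems Lm[OF x0(1) x] by blast
        have e2: "(\<Sum>i\<in>I. c i * tau i x) = 0" using less.prems x by blast
        have "(\<Sum>i\<in>I. d i * tau i x) = (\<Sum>i\<in>I. c i * tau i (x0 * x)) - tau i0 x0 * (\<Sum>i\<in>I. c i * tau i x)"
          unfolding d_def by (simp add: mult[OF _ x0(1) x] sum_distrib_left algebra_simps sum_subtractf)
        thus "(\<Sum>i\<in>I. d i * tau i x) = 0" using e1 e2 by simp
      qed
      have sub: "{i\<in>I. d i \<noteq> 0} \<subseteq> {i\<in>I. c i \<noteq> 0} - {i0}" unfolding d_def by auto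
      have "card {i\<in>I. d i \<noteq> 0} < card {i\<in>I. c i \<noteq> 0}"
      proof -
        have "card {i\<in>I. d i \<noteq> 0} \<le> card ({i\<in>I. c i \<noteq> 0} - {i0})"
          by (rule card_mono) (use sub fin in auto)
        also have "\<dots> < card {i\<in>I. c i \<noteq> 0}"
          by (rule card_Diff1_less) (use i0 fin in auto)
        finally show ?thesis .
      qed
      hence "\<forall>i\<in>I. d i = 0" using less.hyps sold by blast
      hence "d j0 = 0" using j0(1) by blast
      thus False using j0(3) x0(2) d_def by simp
    qed
  qed
qed

definition fscale :: "'a::field \<Rightarrow> ('b \<Rightarrow> 'a) \<Rightarrow> ('b \<Rightarrow> 'a)" where
  "fscale c f = (\<lambda>i. c * f i)"

interpretation fvs: vector_space "fscale :: 'a::field \<Rightarrow> ('b \<Rightarrow> 'a) \<Rightarrow> ('b \<Rightarrow> 'a)"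
  by unfold_locales (auto simp: fscale_def fun_eq_iff algebra_simps)

lemma fsum_apply: "(\<Sum>v\<in>t. f v) (i::'b) = (\<Sum>v\<in>t. f v i)" for f :: "'c \<Rightarrow> 'b \<Rightarrow> 'a::comm_monoid_add"
  by (induction t rule: infinite_finite_induct) auto

lemma fvs_indepI:
  fixes V :: "('b \<Rightarrow> 'a::field) set"
  assumes "\<And>t c. finite t \<Longrightarrow> t \<subseteq> V \<Longrightarrow> (\<forall>i. (\<Sum>v\<in>t. c v * v i) = 0) \<Longrightarrow> (\<forall>v\<in>t. c v = 0)"
  shows "fvs.independent V"
  unfolding fvs.independent_explicit_module
proof (intro allI impI)
  fix t u v assume t: "finite t" "t \<subseteq> V" "(\<Sum>v\<in>t. fscale (u v) v) = 0" "v \<in> t"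
  have "\<forall>i. (\<Sum>v\<in>t. u v * v i) = 0"
  proof
    fix i
    have "(\<Sum>v\<in>t. fscale (u v) v) i = 0" using t(3) by simp
    thus "(\<Sum>v\<in>t. u v * v i) = 0" by (simp add: fsum_apply fscale_def)
  qed
  thus "u v = 0" using assms[OF t(1,2)] t(4) by blast
qed

lemma fvs_span_sum:
  assumes "finite t" "t \<subseteq> B"
  shows "(\<lambda>i. \<Sum>v\<in>t. c v * v i) \<in> fvs.span B"
proof -
  have "(\<Sum>v\<in>t. fscale (c v) v) \<in> fvs.span B"
    using assms by (intro fvs.span_sum fvs.span_scale fvs.span_base) auto
  moreover have "(\<Sum>v\<in>t. fscale (c v) v) = (\<lambda>i. \<Sum>v\<in>t. c v * v i)"
    by (simp add: fun_eq_iff fsum_apply fscale_def)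
  ultimately show ?thesis by simp
qed

lemma card_indep_le:
  fixes V :: "(nat \<Rightarrow> 'a::field) set"
  assumes supp: "\<And>v i. v \<in> V \<Longrightarrow> i \<ge> m \<Longrightarrow> v i = 0"
    and ind: "fvs.independent V"
  shows "finite V \<and> card V \<le> m"
proof -
  define e where "e j = (\<lambda>i::nat. if i = j then (1::'a) else 0)" for j :: nat
  define E where "E = e ` {..<m}"
  have "V \<subseteq> fvs.span E"
  proof
    fix v assume v: "v \<in> V"
    have "(\<Sum>j<m. fscale (v j) (e j)) \<in> fvs.span E"
      by (intro fvs.span_sum fvs.span_scale fvs.span_base) (auto simp: E_def)
    moreover have "(\<Sum>j<m. fscale (v j) (e j)) = v"
    proof
      fix i
      show "(\<Sum>j<m. fscale (v j) (e j)) i = v i"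
      proof (cases "i < m")
        case True
        show ?thesis using True by (simp add: fsum_apply fscale_def e_def if_distrib cong: if_cong)
      next
        case False
        have "(\<Sum>j<m. fscale (v j) (e j)) i = 0" using False by (simp add: fsum_apply fscale_def e_def)
        thus ?thesis using supp[OF v] False by simp
      qed
    qed
    ultimately show "v \<in> fvs.span E" by simp
  qed
  moreover note ind
  moreover have "finite E" unfolding E_def by simp
  ultimately have "finite V \<and> card V \<le> card E" using fvs.independent_span_bound[of E V] by simp
  moreover have "card E \<le> m" unfolding E_def using card_image_le[of "{..<m}" e] by simp
  ultimately show ?thesis by simp
qed

lemma fvs_indep_family:
  fixes r :: "nat \<Rightarrow> ('b \<Rightarrow> 'a::field)"
  assumes A: "\<And>c. (\<forall>x. (\<Sum>i<m. c i * r i x) = 0) \<Longrightarrow> \<forall>i<m. c i = 0"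
  shows "inj_on r {..<m}" "fvs.independent (r ` {..<m})"
proof -
  show inj: "inj_on r {..<m}"
  proof (rule inj_onI, rule ccontr)
    fix i k assume ik: "i \<in> {..<m}" "k \<in> {..<m}" "r i = r k" "i \<noteq> k"
    define c where "c l = (if l = i then 1 else if l = k then -1 else (0::'a))" for l
    have "\<forall>x. (\<Sum>l<m. c l * r l x) = 0"
    proof
      fix x
      have "(\<Sum>l<m. c l * r l x) = (\<Sum>l<m. (if l = i then r i x else 0) + (if l = k then - r k x else 0))"
        by (rule sum.cong) (use ik in \<open>auto simp: c_def\<close>)
      also have "\<dots> = r i x - r k x" using ik by (simp add: sum.distrib)
      finally show "(\<Sum>l<m. c l * r l x) = 0" using ik by simp
    qed
    hence "c i = 0" using A ik by blast
    thus False by (simp add: c_def)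
  qed
  show "fvs.independent (r ` {..<m})"
  proof (rule fvs_indepI)
    fix t c assume t: "finite t" "t \<subseteq> r ` {..<m}" "\<forall>x. (\<Sum>v\<in>t. c v * v x) = 0"
    define J where "J = {i. i < m \<and> r i \<in> t}"
    have tJ: "t = r ` J" using t(2) unfolding J_def by auto
    have injJ: "inj_on r J" using inj unfolding J_def by (rule inj_on_subset) auto
    define c' where "c' i = (if i \<in> J then c (r i) else 0)" for i
    have "\<forall>x. (\<Sum>i<m. c' i * r i x) = 0"
    proof
      fix x
      have "(\<Sum>i<m. c' i * r i x) = (\<Sum>i\<in>J. c (r i) * r i x)"
        unfolding c'_def by (rule sum.mono_neutral_cong_right) (auto simp: J_def)
      also have "\<dots> = (\<Sum>v\<in>t. c v * v x)" unfolding tJ using sum.reindex[OF injJ, of "\<lambda>v. c v * v x"] by simp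
      finally show "(\<Sum>i<m. c' i * r i x) = 0" using t(3) by simp
    qed
    hence c'0: "\<forall>i<m. c' i = 0" by (rule A)
    show "\<forall>v\<in>t. c v = 0"
    proof
      fix v assume "v \<in> t"
      then obtain i where "i \<in> J" "v = r i" using tJ by blast
      thus "c v = 0" using c'0 unfolding c'_def J_def by auto
    qed
  qed
qed

lemma card_ge_cols:
  fixes V :: "'b set" and w :: "nat \<Rightarrow> 'b \<Rightarrow> 'a::field"
  assumes fin: "finite V"
    and inj_sol: "\<And>c. (\<forall>v\<in>V. (\<Sum>j<m. c j * w j v) = 0) \<Longrightarrow> \<forall>j<m. c j = 0"
  shows "m \<le> card V"
proof -
  define col where "col j = (\<lambda>v. if v \<in> V then w j v else 0)" for j
  have A: "\<forall>j<m. c j = 0" if "\<forall>x. (\<Sum>j<m. c j * col j x) = 0" for c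
  proof -
    have "\<forall>v\<in>V. (\<Sum>j<m. c j * w j v) = 0"
    proof
      fix v assume "v \<in> V"
      thus "(\<Sum>j<m. c j * w j v) = 0" using spec[OF that, of v] unfolding col_def by simp
    qed
    thus ?thesis by (rule inj_sol)
  qed
  note fam = fvs_indep_family[where m = m and r = col, OF A]
  define d where "d v = (\<lambda>u. if u = v then (1::'a) else 0)" for v :: 'b
  have "col ` {..<m} \<subseteq> fvs.span (d ` V)"
  proof
    fix f assume "f \<in> col ` {..<m}"
    then obtain j where j: "f = col j" by blast
    have "(\<Sum>v\<in>V. fscale (w j v) (d v)) \<in> fvs.span (d ` V)"
      by (intro fvs.span_sum fvs.span_scale fvs.span_base) auto
    moreover have "(\<Sum>v\<in>V. fscale (w j v) (d v)) = col j"
    proof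
      fix u
      show "(\<Sum>v\<in>V. fscale (w j v) (d v)) u = col j u"
        using fin by (simp add: fsum_apply fscale_def d_def col_def if_distrib cong: if_cong)
    qed
    ultimately show "f \<in> fvs.span (d ` V)" using j by simp
  qed
  hence "card (col ` {..<m}) \<le> card (d ` V)"
    using fvs.independent_span_bound[of "d ` V" "col ` {..<m}"] fam(2) fin by simp
  also have "\<dots> \<le> card V" by (rule card_image_le[OF fin])
  finally show ?thesis using card_image[OF fam(1)] by simp
qed

lemma solve_square:
  fixes M :: "nat \<Rightarrow> nat \<Rightarrow> 'a::field"
  assumes inj: "\<And>c. (\<forall>j<m. (\<Sum>i<m. c i * M i j) = 0) \<Longrightarrow> \<forall>i<m. c i = 0"
  shows "\<exists>c. \<forall>j<m. (\<Sum>i<m. c i * M i j) = t j"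
proof -
  define r where "r i = (\<lambda>j. if j < m then M i j else 0)" for i
  have A: "\<forall>i<m. c i = 0" if "\<forall>x. (\<Sum>i<m. c i * r i x) = 0" for c
  proof -
    have "\<forall>j<m. (\<Sum>i<m. c i * M i j) = 0"
    proof (intro allI impI)
      fix j assume "j < m"
      thus "(\<Sum>i<m. c i * M i j) = 0" using spec[OF that, of j] unfolding r_def by simp
    qed
    thus ?thesis by (rule inj)
  qed
  note fam = fvs_indep_family[where m = m and r = r, OF A]
  define R where "R = r ` {..<m}"
  define t' where "t' = (\<lambda>j. if j < m then t j else 0)"
  have "t' \<in> fvs.span R"
  proof (rule ccontr)
    assume nt: "t' \<notin> fvs.span R"
    hence ind: "fvs.independent (insert t' R)" using fvs.independent_insertI fam(2) R_def by blast
    have cle: "finite (insert t' R) \<and> card (insert t' R) \<le> m"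
      by (rule card_indep_le[OF _ ind]) (auto simp: R_def r_def t'_def)
    have tR: "t' \<notin> R" using nt fvs.span_base by blast
    have cR: "card R = m" unfolding R_def using card_image[OF fam(1)] by simp
    have fR: "finite R" unfolding R_def by simp
    have "card (insert t' R) = Suc (card R)" using card_insert_disjoint[OF fR tR] .
    thus False using cle cR by simp
  qed
  moreover have "finite R" unfolding R_def by simp
  ultimately obtain u where u: "t' = (\<Sum>v\<in>R. fscale (u v) v)" using fvs.span_finite by blast
  define c where "c i = u (r i)" for i
  have "\<forall>j<m. (\<Sum>i<m. c i * M i j) = t j"
  proof (intro allI impI)
    fix j assume j: "j < m"
    have "t j = t' j" using j t'_def by simp
    also have "\<dots> = (\<Sum>v\<in>R. u v * v j)" using u by (simp add: fsum_apply fscale_def)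
    also have "\<dots> = (\<Sum>i<m. u (r i) * r i j)" unfolding R_def by (rule sum.reindex[OF fam(1), simplified])
    also have "\<dots> = (\<Sum>i<m. c i * M i j)" using j by (simp add: c_def r_def)
    finally show "(\<Sum>i<m. c i * M i j) = t j" by simp
  qed
  thus ?thesis by blast
qed

locale setting =
  fixes K k :: "'a::field set" and lam :: "'a \<Rightarrow> 'a" and n m :: nat
    and alpha :: "nat \<Rightarrow> 'a" and lc :: "nat \<Rightarrow> 'a \<Rightarrow> 'a" and beta :: "nat \<Rightarrow> nat \<Rightarrow> nat \<Rightarrow> 'a"
  assumes AC: "is_alg_closure_of K"
    and P: "perfect_subfield K"
    and ksub: "is_subfield k" and kK: "k \<subseteq> K"
    and E: "is_emb k K lam"
    and finO: "finite (emb_orbit K lam)" and cardO: "card (emb_orbit K lam) = n"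
    and injA: "inj_on alpha {..<m}" and basis: "is_basis K (*) (composite K lam) (alpha ` {..<m})"
    and lcH: "\<forall>x\<in>K. (\<forall>i<m. lc i x \<in> K) \<and> lam x = (\<Sum>i<m. lc i x * alpha i)"
    and betaH: "\<forall>i<m. \<forall>j<m. (\<forall>l<m. beta i j l \<in> K) \<and> alpha i * alpha j = (\<Sum>l<m. beta i j l * alpha l)"
begin

abbreviation "L \<equiv> composite K lam"

lemma K: "is_subfield K" using P unfolding perfect_subfield_def by blast

lemma L_mem: "x \<in> L \<longleftrightarrow> (\<forall>F. is_subfield F \<and> K \<subseteq> F \<and> lam ` K \<subseteq> F \<longrightarrow> x \<in> F)"
  unfolding composite_def by blast

lemma L_sf: "is_subfield L"
  unfolding composite_def by (rule sf_Inter) blast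

lemma KL: "K \<subseteq> L" using L_mem by blast
lemma lamKL: "x \<in> K \<Longrightarrow> lam x \<in> L" using L_mem by blast
lemma L_min: "is_subfield F \<Longrightarrow> K \<subseteq> F \<Longrightarrow> lam ` K \<subseteq> F \<Longrightarrow> L \<subseteq> F" using L_mem by blast

lemma E1: "\<forall>x\<in>K. \<forall>y\<in>K. lam (x + y) = lam x + lam y \<and> lam (x * y) = lam x * lam y"
  using E unfolding is_emb_def by (rule conjunct1)
lemma E2: "lam 1 = 1"
  using E unfolding is_emb_def by (rule conjunct1[OF conjunct2])
lemma E3: "\<forall>c\<in>k. \<forall>x\<in>K. lam (c * x) = c * lam x"
  using E unfolding is_emb_def by (rule conjunct2[OF conjunct2])

lemma B1: "finite (alpha ` {..<m})" using basis unfolding is_basis_def by (rule conjunct1)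
lemma B2: "alpha ` {..<m} \<subseteq> L" using basis unfolding is_basis_def by (rule conjunct1[OF conjunct2])
lemma B3: "\<forall>c. (\<forall>b\<in>alpha ` {..<m}. c b \<in> K) \<longrightarrow> (\<Sum>b\<in>alpha ` {..<m}. c b * b) = 0 \<longrightarrow> (\<forall>b\<in>alpha ` {..<m}. c b = 0)"
  using basis unfolding is_basis_def by (rule conjunct1[OF conjunct2[OF conjunct2]])
lemma B4: "\<forall>v\<in>L. \<exists>c. (\<forall>b\<in>alpha ` {..<m}. c b \<in> K) \<and> v = (\<Sum>b\<in>alpha ` {..<m}. c b * b)"
  using basis unfolding is_basis_def by (rule conjunct2[OF conjunct2[OF conjunct2]])

lemma lam_hom: "hom_on K lam"
proof -
  have a: "lam (x + y) = lam x + lam y" "lam (x * y) = lam x * lam y" if "x \<in> K" "y \<in> K" for x y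
    using E1 that by auto
  have "lam 0 + lam 0 = lam 0 + 0" using a(1)[of 0 0] sf_0[OF K] by simp
  hence "lam 0 = 0" by (rule add_left_imp_eq)
  moreover have "lam 1 = 1" by (rule E2)
  ultimately show ?thesis unfolding hom_on_def using a by blast
qed

lemma lam_k: "c \<in> k \<Longrightarrow> lam c = c"
proof -
  assume c: "c \<in> k"
  have "lam (c * 1) = c * lam 1" using E3 c sf_1[OF K] by blast
  thus ?thesis using hom_1[OF lam_hom] by simp
qed

lemma alpha_L: "j < m \<Longrightarrow> alpha j \<in> L"
  using B2 by auto

lemma BI: "(\<forall>j<m. c j \<in> K) \<Longrightarrow> (\<Sum>j<m. c j * alpha j) = 0 \<Longrightarrow> \<forall>j<m. c j = 0"
proof -
  assume cK: "\<forall>j<m. c j \<in> K" and s0: "(\<Sum>j<m. c j * alpha j) = 0"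
  define c' where "c' b = c (inv_into {..<m} alpha b)" for b
  have "\<forall>b\<in>alpha ` {..<m}. c' b \<in> K" using cK unfolding c'_def by (auto simp: inv_into_f_f[OF injA])
  moreover have "(\<Sum>b\<in>alpha ` {..<m}. c' b * b) = 0"
    using s0 by (simp add: sum.reindex[OF injA] c'_def inv_into_f_f[OF injA])
  ultimately have "\<forall>b\<in>alpha ` {..<m}. c' b = 0" using B3 by blast
  thus ?thesis unfolding c'_def by (auto simp: inv_into_f_f[OF injA])
qed

lemma BS: "u \<in> L \<Longrightarrow> \<exists>c. (\<forall>j<m. c j \<in> K) \<and> u = (\<Sum>j<m. c j * alpha j)"
proof -
  assume u: "u \<in> L"
  obtain c where c: "\<forall>b\<in>alpha ` {..<m}. c b \<in> K" "u = (\<Sum>b\<in>alpha ` {..<m}. c b * b)"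
    using bspec[OF B4 u] by (elim exE conjE)
  have c1: "\<forall>j<m. c (alpha j) \<in> K" using c(1) by auto
  have "(\<Sum>b\<in>alpha ` {..<m}. c b * b) = (\<Sum>j<m. c (alpha j) * alpha j)" by (simp add: sum.reindex[OF injA])
  hence "u = (\<Sum>j<m. c (alpha j) * alpha j)" using c(2) by simp
  thus ?thesis using c1 by (intro exI[of _ "\<lambda>j. c (alpha j)"]) simp
qed

definition crd :: "'a \<Rightarrow> nat \<Rightarrow> 'a" where
  "crd u = (SOME c. (\<forall>j<m. c j \<in> K) \<and> u = (\<Sum>j<m. c j * alpha j))"

lemma crd: "u \<in> L \<Longrightarrow> (\<forall>j<m. crd u j \<in> K) \<and> u = (\<Sum>j<m. crd u j * alpha j)"
proof -
  assume u: "u \<in> L"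
  define P where "P c \<longleftrightarrow> (\<forall>j<m. c j \<in> K) \<and> u = (\<Sum>j<m. c j * alpha j)" for c
  have "\<exists>c. P c" unfolding P_def by (rule BS[OF u])
  hence "P (SOME c. P c)" by (rule someI_ex)
  moreover have "crd u = (SOME c. P c)" unfolding crd_def P_def by simp
  ultimately show ?thesis unfolding P_def by simp
qed

lemma crdK: "u \<in> L \<Longrightarrow> j < m \<Longrightarrow> crd u j \<in> K"
  using crd by blast

lemma crd_eq: "u \<in> L \<Longrightarrow> u = (\<Sum>j<m. crd u j * alpha j)"
  using crd by blast

lemma L_comb: "(\<And>j. j \<in> A \<Longrightarrow> a j \<in> K) \<Longrightarrow> (\<And>j. j \<in> A \<Longrightarrow> x j \<in> L) \<Longrightarrow> (\<Sum>j\<in>A. a j * x j) \<in> L"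
proof -
  assume a: "\<And>j. j \<in> A \<Longrightarrow> a j \<in> K" and x: "\<And>j. j \<in> A \<Longrightarrow> x j \<in> L"
  show ?thesis
  proof (rule sf_sum[OF L_sf])
    fix j assume "j \<in> A"
    hence "a j \<in> L" "x j \<in> L" using a x KL by auto
    thus "a j * x j \<in> L" by (rule sf_mult[OF L_sf])
  qed
qed

lemma crd_unique:
  assumes cK: "\<forall>j<m. c j \<in> K" and u: "u = (\<Sum>j<m. c j * alpha j)"
  shows "\<forall>j<m. crd u j = c j"
proof -
  have uL: "u \<in> L" unfolding u by (rule L_comb) (use cK alpha_L in auto)
  have "(\<Sum>j<m. (crd u j - c j) * alpha j) = (\<Sum>j<m. crd u j * alpha j) - (\<Sum>j<m. c j * alpha j)"
    by (simp add: algebra_simps sum_subtractf)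
  also have "\<dots> = 0" using crd_eq[OF uL] u by simp
  finally have z: "(\<Sum>j<m. (crd u j - c j) * alpha j) = 0" .
  have k: "\<forall>j<m. crd u j - c j \<in> K" using crdK[OF uL] cK sf_diff[OF K] by blast
  have "\<forall>j<m. crd u j - c j = 0" by (rule BI[OF k z])
  thus ?thesis by simp
qed

lemma crd_comb:
  assumes fin: "finite A" and a: "\<And>i. i \<in> A \<Longrightarrow> a i \<in> K" and x: "\<And>i. i \<in> A \<Longrightarrow> x i \<in> L" and j: "j < m"
  shows "crd (\<Sum>i\<in>A. a i * x i) j = (\<Sum>i\<in>A. a i * crd (x i) j)"
proof -
  define c where "c j = (\<Sum>i\<in>A. a i * crd (x i) j)" for j
  have cK: "\<forall>j<m. c j \<in> K"
  proof (intro allI impI)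
    fix j assume j: "j < m"
    show "c j \<in> K" unfolding c_def
    proof (rule sf_sum[OF K])
      fix i assume i: "i \<in> A"
      show "a i * crd (x i) j \<in> K" using a[OF i] crdK[OF x[OF i] j] by (rule sf_mult[OF K])
    qed
  qed
  have "(\<Sum>i\<in>A. a i * x i) = (\<Sum>i\<in>A. a i * (\<Sum>j<m. crd (x i) j * alpha j))"
    using crd_eq[OF x] by (intro sum.cong) auto
  also have "\<dots> = (\<Sum>i\<in>A. \<Sum>j<m. a i * crd (x i) j * alpha j)"
    by (simp add: sum_distrib_left mult.assoc)
  also have "\<dots> = (\<Sum>j<m. \<Sum>i\<in>A. a i * crd (x i) j * alpha j)"
    by (rule sum.swap)
  also have "\<dots> = (\<Sum>j<m. c j * alpha j)"
    unfolding c_def by (simp add: sum_distrib_right)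
  finally have "(\<Sum>i\<in>A. a i * x i) = (\<Sum>j<m. c j * alpha j)" .
  hence "\<forall>j<m. crd (\<Sum>i\<in>A. a i * x i) j = c j" by (rule crd_unique[OF cK])
  thus ?thesis using j unfolding c_def by blast
qed

lemma crd_alpha: "i < m \<Longrightarrow> j < m \<Longrightarrow> crd (alpha i) j = (if j = i then 1 else 0)"
proof -
  assume i: "i < m" and j: "j < m"
  have cK: "\<forall>j<m. (if j = i then 1 else 0) \<in> K" using K by (simp add: sf_0 sf_1)
  have "(\<Sum>j<m. (if j = i then 1 else 0) * alpha j) = (\<Sum>j<m. if j = i then alpha j else 0)"
    by (rule sum.cong) auto
  also have "\<dots> = alpha i" using i by simp
  finally have "alpha i = (\<Sum>j<m. (if j = i then 1 else 0) * alpha j)" by simp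
  hence "\<forall>j<m. crd (alpha i) j = (if j = i then 1 else 0)" by (rule crd_unique[OF cK])
  thus ?thesis using j by blast
qed

lemma m_pos: "m > 0"
proof (rule ccontr)
  assume "\<not> m > 0"
  hence m0: "m = 0" by simp
  have "(1::'a) = (\<Sum>j<m. crd 1 j * alpha j)" by (rule crd_eq[OF sf_1[OF L_sf]])
  thus False using m0 by simp
qed

end

lemma card_eq_images:
  assumes "\<And>a b. a \<in> A \<Longrightarrow> b \<in> A \<Longrightarrow> f a = f b \<longleftrightarrow> g a = g b"
  shows "bij_betw (\<lambda>y. g (inv_into A f y)) (f ` A) (g ` A)"
proof -
  define h where "h y = g (inv_into A f y)" for y
  have hf: "h (f a) = g a" if a: "a \<in> A" for a
  proof -
    have "inv_into A f (f a) \<in> A" using a by (simp add: inv_into_into)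
    moreover have "f (inv_into A f (f a)) = f a" using a by (simp add: f_inv_into_f)
    ultimately show ?thesis unfolding h_def using assms a by blast
  qed
  have "inj_on h (f ` A)"
  proof (rule inj_onI)
    fix x y assume "x \<in> f ` A" "y \<in> f ` A" "h x = h y"
    then obtain a b where ab: "a \<in> A" "b \<in> A" "x = f a" "y = f b" "h (f a) = h (f b)" by blast
    hence "g a = g b" using hf by simp
    thus "x = y" using assms ab by blast
  qed
  moreover have "h ` f ` A = g ` A"
  proof
    show "h ` f ` A \<subseteq> g ` A" using hf by auto
    show "g ` A \<subseteq> h ` f ` A"
    proof
      fix z assume "z \<in> g ` A"
      then obtain a where "a \<in> A" "z = g a" by blast
      thus "z \<in> h ` f ` A" using hf by (metis imageI)
    qed
  qed
  ultimately show ?thesis unfolding bij_betw_def h_def by simp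
qed

lemma Gal_comp:
  assumes s: "s \<in> Gal_cl K" and t: "t \<in> Gal_cl K"
  shows "s \<circ> t \<in> Gal_cl K"
proof (rule Gal_cl_I)
  show "bij (s \<circ> t)" using GalD(1)[OF s] GalD(1)[OF t] by (rule bij_comp[OF _ , rotated])
next
  fix x y
  show "(s \<circ> t) (x + y) = (s \<circ> t) x + (s \<circ> t) y" by (simp add: GalD(2)[OF s] GalD(2)[OF t])
  show "(s \<circ> t) (x * y) = (s \<circ> t) x * (s \<circ> t) y" by (simp add: GalD(3)[OF s] GalD(3)[OF t])
next
  fix x assume "x \<in> K" thus "(s \<circ> t) x = x" by (simp add: GalD(4)[OF s] GalD(4)[OF t])
qed

context setting
begin

definition oe :: "('a \<Rightarrow> 'a) \<Rightarrow> 'a \<Rightarrow> 'a" where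
  "oe s = (\<lambda>x. if x \<in> K then s (lam x) else undefined)"

definition vec :: "('a \<Rightarrow> 'a) \<Rightarrow> nat \<Rightarrow> 'a" where
  "vec s = (\<lambda>j. if j < m then s (alpha j) else 0)"

lemma orbit_eq: "emb_orbit K lam = oe ` Gal_cl K"
  unfolding emb_orbit_def oe_def by auto

lemma Gal_L_expand:
  assumes s: "s \<in> Gal_cl K" and y: "y \<in> L"
  shows "s y = (\<Sum>j<m. crd y j * s (alpha j))"
proof -
  have "s y = s (\<Sum>j<m. crd y j * alpha j)" using crd_eq[OF y] by simp
  also have "\<dots> = (\<Sum>j<m. s (crd y j) * s (alpha j))" by (simp add: Gal_sum[OF s] Gal_mult[OF s])
  also have "\<dots> = (\<Sum>j<m. crd y j * s (alpha j))"
    by (rule sum.cong) (auto simp: GalD(4)[OF s] crdK[OF y])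
  finally show ?thesis .
qed

lemma agree_L:
  assumes s: "s \<in> Gal_cl K" and t: "t \<in> Gal_cl K" and eq: "\<And>x. x \<in> K \<Longrightarrow> s (lam x) = t (lam x)"
  shows "y \<in> L \<Longrightarrow> s y = t y"
proof -
  assume y: "y \<in> L"
  define F where "F = {y. s y = t y}"
  have hs: "hom_on UNIV s" and ht: "hom_on UNIV t" using Gal_hom s t by auto
  have "is_subfield F" unfolding is_subfield_def F_def
    using hom_0[OF hs] hom_0[OF ht] hom_1[OF hs] hom_1[OF ht]
      hom_add[OF hs] hom_add[OF ht] hom_mult[OF hs] hom_mult[OF ht]
      hom_uminus[OF sf_UNIV hs] hom_uminus[OF sf_UNIV ht] hom_inverse[OF sf_UNIV hs] hom_inverse[OF sf_UNIV ht]
    by simp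
  moreover have "K \<subseteq> F" unfolding F_def using GalD(4)[OF s] GalD(4)[OF t] by auto
  moreover have "lam ` K \<subseteq> F" unfolding F_def using eq by auto
  ultimately have "L \<subseteq> F" by (rule L_min)
  thus ?thesis using y F_def by auto
qed

lemma oe_vec:
  assumes s: "s \<in> Gal_cl K" and t: "t \<in> Gal_cl K"
  shows "oe s = oe t \<longleftrightarrow> vec s = vec t"
proof
  assume "oe s = oe t"
  hence eq: "s (lam x) = t (lam x)" if "x \<in> K" for x using that unfolding oe_def by (metis (mono_tags))
  show "vec s = vec t"
  proof
    fix j show "vec s j = vec t j" unfolding vec_def using agree_L[OF s t eq] alpha_L by simp
  qed
next
  assume v: "vec s = vec t"
  have a: "s (alpha j) = t (alpha j)" if "j < m" for j
    using fun_cong[OF v, of j] that unfolding vec_def by simp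
  have "s y = t y" if "y \<in> L" for y
    using Gal_L_expand[OF s that] Gal_L_expand[OF t that] a by simp
  thus "oe s = oe t" unfolding oe_def using lamKL by auto
qed

definition V where "V = vec ` Gal_cl K"

lemma V_card: "finite V \<and> card V = n"
proof -
  have b: "bij_betw (\<lambda>y. vec (inv_into (Gal_cl K) oe y)) (oe ` Gal_cl K) (vec ` Gal_cl K)"
    by (rule card_eq_images) (rule oe_vec)
  have "finite (oe ` Gal_cl K)" "card (oe ` Gal_cl K) = n" using finO cardO orbit_eq by auto
  thus ?thesis using bij_betw_finite[OF b] bij_betw_same_card[OF b] V_def by simp
qed

end

context setting
begin

lemma fixK: "(\<forall>s\<in>Gal_cl K. s x = x) \<Longrightarrow> x \<in> K"
  using Gal_fix[OF AC P] by blast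

definition gs :: "(nat \<Rightarrow> 'a) \<Rightarrow> 'a \<Rightarrow> 'a" where
  "gs v = (SOME s. s \<in> Gal_cl K \<and> vec s = v)"

lemma gs: "v \<in> V \<Longrightarrow> gs v \<in> Gal_cl K \<and> vec (gs v) = v"
proof -
  assume "v \<in> V"
  hence "\<exists>s. s \<in> Gal_cl K \<and> vec s = v" unfolding V_def by blast
  thus ?thesis unfolding gs_def by (rule someI_ex)
qed

lemma V_supp: "v \<in> V \<Longrightarrow> i \<ge> m \<Longrightarrow> v i = 0"
  unfolding V_def vec_def by auto

lemma V_indep: "fvs.independent V"
proof (rule fvs_indepI)
  fix t c assume t: "finite t" "t \<subseteq> V" "\<forall>i. (\<Sum>v\<in>t. c v * v i) = 0"
  have gsG: "gs v \<in> Gal_cl K" "vec (gs v) = v" if "v \<in> t" for v using gs t(2) that by blast+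
  show "\<forall>v\<in>t. c v = 0"
  proof (rule dedekind[where I = t and tau = gs and L = "composite K lam" and c = c])
    show "finite t" by fact
  next
    fix i x y assume "i \<in> t" "x \<in> L" "y \<in> L"
    thus "gs i (x * y) = gs i x * gs i y" using Gal_mult gsG by blast
  next
    fix i assume "i \<in> t" thus "gs i 1 = 1" using hom_1[OF Gal_hom[OF gsG(1)]] by blast
  next
    show "1 \<in> L" by (rule sf_1[OF L_sf])
  next
    fix x y assume "x \<in> L" "y \<in> L" thus "x * y \<in> L" by (rule sf_mult[OF L_sf])
  next
    fix i j assume ij: "i \<in> t" "j \<in> t" "i \<noteq> j"
    hence "vec (gs i) \<noteq> vec (gs j)" using gsG by metis
    then obtain l where l: "vec (gs i) l \<noteq> vec (gs j) l" by blast
    hence "l < m" unfolding vec_def by (cases "l < m") auto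
    hence "gs i (alpha l) \<noteq> gs j (alpha l)" using l unfolding vec_def by simp
    thus "\<exists>x\<in>L. gs i x \<noteq> gs j x" using alpha_L[OF \<open>l < m\<close>] by blast
  next
    show "\<forall>x\<in>L. (\<Sum>i\<in>t. c i * gs i x) = 0"
    proof
      fix x assume x: "x \<in> L"
      have "(\<Sum>i\<in>t. c i * gs i x) = (\<Sum>i\<in>t. c i * (\<Sum>j<m. crd x j * i j))"
      proof (rule sum.cong[OF refl])
        fix v assume v: "v \<in> t"
        have "gs v x = (\<Sum>j<m. crd x j * gs v (alpha j))" by (rule Gal_L_expand[OF gsG(1)[OF v] x])
        also have "\<dots> = (\<Sum>j<m. crd x j * v j)"
        proof (rule sum.cong[OF refl])
          fix j assume "j \<in> {..<m}"
          hence "vec (gs v) j = gs v (alpha j)" unfolding vec_def by simp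
          thus "crd x j * gs v (alpha j) = crd x j * v j" using gsG(2)[OF v] by simp
        qed
        finally show "c v * gs v x = c v * (\<Sum>j<m. crd x j * v j)" by simp
      qed
      also have "\<dots> = (\<Sum>j<m. crd x j * (\<Sum>i\<in>t. c i * i j))"
        by (simp add: sum_distrib_left sum_distrib_right sum.swap[of _ t] mult_ac)
      also have "\<dots> = 0" using t(3) by simp
      finally show "(\<Sum>i\<in>t. c i * gs i x) = 0" .
    qed
  qed
qed

lemma n_le_m: "n \<le> m"
proof -
  have "finite V \<and> card V \<le> m" by (rule card_indep_le) (use V_supp V_indep in auto)
  thus ?thesis using V_card by simp
qed

lemma vec_comp: "s \<in> Gal_cl K \<Longrightarrow> (\<lambda>j. s (vec t j)) = vec (s \<circ> t)"
  using hom_0[OF Gal_hom] unfolding vec_def by (auto simp: fun_eq_iff)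

lemma V_solution_zero:
  assumes sol: "\<forall>r\<in>V. (\<Sum>j<m. c j * r j) = 0"
  shows "\<forall>j<m. c j = 0"
proof (rule descent[of K V m, OF _ _ _ sol])
  fix x assume "\<forall>s\<in>Gal_cl K. s x = x" thus "x \<in> K" by (rule fixK)
next
  fix r s assume r: "r \<in> V" and s: "s \<in> Gal_cl K"
  then obtain t where t: "t \<in> Gal_cl K" "r = vec t" unfolding V_def by blast
  have "(\<lambda>j. s (r j)) = vec (s \<circ> t)" using vec_comp[OF s] t(2) by simp
  moreover have "s \<circ> t \<in> Gal_cl K" by (rule Gal_comp[OF s t(1)])
  ultimately show "(\<lambda>j. s (r j)) \<in> V" unfolding V_def by blast
next
  fix c assume cK: "\<forall>j<m. c j \<in> K" and sol': "\<forall>r\<in>V. (\<Sum>j<m. c j * r j) = 0"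
  have "vec id \<in> V" unfolding V_def using Gal_id by blast
  hence "(\<Sum>j<m. c j * vec id j) = 0" using sol' by blast
  hence "(\<Sum>j<m. c j * alpha j) = 0" by (simp add: vec_def)
  thus "\<forall>j<m. c j = 0" by (rule BI[OF cK])
qed

lemma m_le_n: "m \<le> n"
proof -
  have "m \<le> card V"
    by (rule card_ge_cols[where w = "\<lambda>j v. v j"]) (use V_card V_solution_zero in auto)
  thus ?thesis using V_card by simp
qed

lemma m_eq_n: "m = n" using n_le_m m_le_n by simp

end

context setting
begin

lemma lam_add: "a \<in> K \<Longrightarrow> b \<in> K \<Longrightarrow> lam (a + b) = lam a + lam b" using hom_add[OF lam_hom] .
lemma lam_mult: "a \<in> K \<Longrightarrow> b \<in> K \<Longrightarrow> lam (a * b) = lam a * lam b" using hom_mult[OF lam_hom] .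

lemma V_is_tsvs: "is_tsvs k K (V_lam K lam)"
proof -
  have c1: "0 \<in> L" by (rule sf_0[OF L_sf])
  have c2: "\<forall>v\<in>L. \<forall>w\<in>L. v + w \<in> L" using sf_add[OF L_sf] by blast
  have c3: "\<forall>v\<in>L. - v \<in> L" using sf_uminus[OF L_sf] by blast
  have c4: "\<forall>a\<in>K. \<forall>v\<in>L. a * v \<in> L \<and> v * lam a \<in> L"
    using sf_mult[OF L_sf] KL lamKL by blast
  have c5: "\<forall>a\<in>K. \<forall>v\<in>L. \<forall>w\<in>L. a * (v + w) = a * v + a * w \<and> (v + w) * lam a = v * lam a + w * lam a"
    by (simp add: algebra_simps)
  have c6: "\<forall>a\<in>K. \<forall>b\<in>K. \<forall>v\<in>L. (a + b) * v = a * v + b * v \<and> v * lam (a + b) = v * lam a + v * lam b \<and>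
      (a * b) * v = a * (b * v) \<and> v * lam (a * b) = v * lam a * lam b \<and> (a * v) * lam b = a * (v * lam b)"
    by (simp add: lam_add lam_mult algebra_simps)
  have c7: "\<forall>v\<in>L. 1 * v = v \<and> v * lam 1 = v" by (simp add: E2)
  have c8: "\<forall>c\<in>k. \<forall>v\<in>L. c * v = v * lam c" by (simp add: lam_k)
  show ?thesis unfolding is_tsvs_def V_lam_def Let_def
    using c1 c2 c3 c4 c5 c6 c7 c8 by simp
qed

lemma sub_trivial:
  assumes W: "is_sub_tsvs K (V_lam K lam) W" and ne: "W \<noteq> {0}"
  shows "W = L"
proof -
  have WL: "W \<subseteq> L" and W0: "0 \<in> W" and Wadd: "\<And>v w. v \<in> W \<Longrightarrow> w \<in> W \<Longrightarrow> v + w \<in> W"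
    and Wl: "\<And>a v. a \<in> K \<Longrightarrow> v \<in> W \<Longrightarrow> a * v \<in> W"
    and Wr: "\<And>a v. a \<in> K \<Longrightarrow> v \<in> W \<Longrightarrow> v * lam a \<in> W"
    using W unfolding is_sub_tsvs_def V_lam_def by auto
  obtain w where w: "w \<in> W" "w \<noteq> 0" using ne W0 by blast
  define S where "S = {x \<in> L. \<forall>v\<in>W. x * v \<in> W}"
  have S_add: "x + y \<in> S" if "x \<in> S" "y \<in> S" for x y
    using that sf_add[OF L_sf] Wadd unfolding S_def by (auto simp: distrib_right)
  have S_mult: "x * y \<in> S" if "x \<in> S" "y \<in> S" for x y
    using that sf_mult[OF L_sf] unfolding S_def by (auto simp: mult.assoc)
  have KS: "K \<subseteq> S" unfolding S_def using KL Wl by auto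
  have lS: "lam ` K \<subseteq> S" unfolding S_def using lamKL Wr by (auto simp: mult.commute)
  have S_inv: "inverse x \<in> S" if x: "x \<in> S" for x
  proof (cases "x = 0")
    case True thus ?thesis using KS sf_0[OF K] by auto
  next
    case False
    obtain p where p: "p \<noteq> 0" "polyF K p" "poly p x = 0" using alg_closure_facts(2)[OF AC] by blast
    obtain q where q: "polyF K q" "x * poly q x = 1" using alg_inverse[OF K False p] by blast
    have "poly q x \<in> S" by (rule poly_closure[OF K KS S_add S_mult x q(1)])
    moreover have "inverse x = poly q x" using q(2) by (metis inverse_unique)
    ultimately show ?thesis by simp
  qed
  have S_uminus: "- x \<in> S" if "x \<in> S" for x
  proof -
    have "- 1 \<in> S" using KS sf_uminus[OF K sf_1[OF K]] by auto
    hence "(- 1) * x \<in> S" using S_mult that by blast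
    thus ?thesis by simp
  qed
  have "0 \<in> S" "1 \<in> S" using KS sf_0[OF K] sf_1[OF K] by auto
  hence "is_subfield S" unfolding is_subfield_def
    using S_add S_mult S_uminus S_inv by simp
  hence LS: "L \<subseteq> S" using KS lS by (intro L_min) auto
  have "L \<subseteq> W"
  proof
    fix y assume y: "y \<in> L"
    have "y * inverse w \<in> L" using y w WL sf_mult[OF L_sf] sf_inverse[OF L_sf] by blast
    hence "(y * inverse w) * w \<in> W" using LS w(1) unfolding S_def by blast
    moreover have "(y * inverse w) * w = y" using w(2) by (simp add: mult.assoc)
    ultimately show "y \<in> W" by simp
  qed
  thus ?thesis using WL by blast
qed

lemma V_simple: "simple_tsvs k K (V_lam K lam)"
proof -
  have vc: "vcarrier (V_lam K lam) = L" unfolding V_lam_def by simp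
  have "vcarrier (V_lam K lam) \<noteq> {0}" using sf_1[OF L_sf] vc by auto
  moreover have "\<forall>W. is_sub_tsvs K (V_lam K lam) W \<longrightarrow> W = {0} \<or> W = vcarrier (V_lam K lam)"
    using sub_trivial vc by blast
  ultimately show ?thesis unfolding simple_tsvs_def using V_is_tsvs by simp
qed

end

context setting
begin

lemma crd_add: "u \<in> L \<Longrightarrow> v \<in> L \<Longrightarrow> j < m \<Longrightarrow> crd (u + v) j = crd u j + crd v j"
proof -
  assume u: "u \<in> L" and v: "v \<in> L" and j: "j < m"
  have cK: "\<forall>j<m. crd u j + crd v j \<in> K" using crdK[OF u] crdK[OF v] sf_add[OF K] by blast
  have "u + v = (\<Sum>j<m. crd u j * alpha j) + (\<Sum>j<m. crd v j * alpha j)"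
    using crd_eq[OF u] crd_eq[OF v] by simp
  also have "\<dots> = (\<Sum>j<m. (crd u j + crd v j) * alpha j)" by (simp add: sum.distrib distrib_right)
  finally have "\<forall>j<m. crd (u + v) j = crd u j + crd v j" by (rule crd_unique[OF cK])
  thus ?thesis using j by blast
qed

lemma crd_smult: "a \<in> K \<Longrightarrow> u \<in> L \<Longrightarrow> j < m \<Longrightarrow> crd (a * u) j = a * crd u j"
proof -
  assume a: "a \<in> K" and u: "u \<in> L" and j: "j < m"
  have cK: "\<forall>j<m. a * crd u j \<in> K" using crdK[OF u] sf_mult[OF K a] by blast
  have "a * u = a * (\<Sum>j<m. crd u j * alpha j)" using crd_eq[OF u] by simp
  also have "\<dots> = (\<Sum>j<m. (a * crd u j) * alpha j)" by (simp add: sum_distrib_left mult.assoc)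
  finally have "\<forall>j<m. crd (a * u) j = a * crd u j" by (rule crd_unique[OF cK])
  thus ?thesis using j by blast
qed

lemma crd_diff: "u \<in> L \<Longrightarrow> v \<in> L \<Longrightarrow> j < m \<Longrightarrow> crd (u - v) j = crd u j - crd v j"
proof -
  assume u: "u \<in> L" and v: "v \<in> L" and j: "j < m"
  have "u - v \<in> L" using sf_diff[OF L_sf u v] .
  hence "crd ((u - v) + v) j = crd (u - v) j + crd v j" using crd_add v j by blast
  thus ?thesis by simp
qed

definition fmap :: "'a \<Rightarrow> nat \<Rightarrow> 'a" where
  "fmap u = (\<lambda>j. if j < m then crd (u * alpha j) 0 else 0)"

lemma uaL: "u \<in> L \<Longrightarrow> j < m \<Longrightarrow> u * alpha j \<in> L"
  using sf_mult[OF L_sf] alpha_L by blast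

lemma kernel:
  assumes w: "w \<in> L" and z: "\<forall>j<m. crd (w * alpha j) 0 = 0"
  shows "w = 0"
proof (rule ccontr)
  assume w0: "w \<noteq> 0"
  have m0: "0 < m" by (rule m_pos)
  define y where "y = inverse w * alpha 0"
  have yL: "y \<in> L" unfolding y_def using sf_mult[OF L_sf sf_inverse[OF L_sf w] alpha_L[OF m0]] .
  have "w * y = alpha 0" unfolding y_def using w0 by (simp add: mult.assoc[symmetric])
  hence c1: "crd (w * y) 0 = 1" using crd_alpha[OF m0 m0] by simp
  have "w * y = (\<Sum>j<m. crd y j * (w * alpha j))"
    using crd_eq[OF yL] by (metis (no_types, lifting) mult.left_commute sum.cong sum_distrib_left)
  hence "crd (w * y) 0 = (\<Sum>j<m. crd y j * crd (w * alpha j) 0)"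
    using crd_comb[of "{..<m}" "crd y" "\<lambda>j. w * alpha j" 0] crdK[OF yL] uaL[OF w] m0 by simp
  also have "\<dots> = 0" using z by simp
  finally show False using c1 by simp
qed


definition Mx :: "nat \<Rightarrow> nat \<Rightarrow> 'a" where
  "Mx i j = (if i < m \<and> j < m then crd (alpha i * alpha j) 0 else 0)"

lemma MxK: "Mx i j \<in> K"
  unfolding Mx_def using crdK[OF uaL[OF alpha_L]] m_pos sf_0[OF K] by auto

lemma comb_L: "\<forall>i<m. c i \<in> K \<Longrightarrow> (\<Sum>i<m. c i * alpha i) \<in> L"
  by (rule L_comb) (use alpha_L in auto)

lemma fmap_comb:
  assumes cK: "\<forall>i<m. c i \<in> K" and j: "j < m"
  shows "crd ((\<Sum>i<m. c i * alpha i) * alpha j) 0 = (\<Sum>i<m. c i * Mx i j)"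
proof -
  have "(\<Sum>i<m. c i * alpha i) * alpha j = (\<Sum>i<m. c i * (alpha i * alpha j))"
    by (simp add: sum_distrib_right mult.assoc)
  hence "crd ((\<Sum>i<m. c i * alpha i) * alpha j) 0 = (\<Sum>i<m. c i * crd (alpha i * alpha j) 0)"
    using crd_comb[of "{..<m}" c "\<lambda>i. alpha i * alpha j" 0] cK uaL[OF alpha_L] j m_pos by simp
  also have "\<dots> = (\<Sum>i<m. c i * Mx i j)" using j by (simp add: Mx_def)
  finally show ?thesis .
qed

lemma injK: "\<forall>i<m. c i \<in> K \<Longrightarrow> \<forall>j<m. (\<Sum>i<m. c i * Mx i j) = 0 \<Longrightarrow> \<forall>i<m. c i = 0"
proof -
  assume cK: "\<forall>i<m. c i \<in> K" and z: "\<forall>j<m. (\<Sum>i<m. c i * Mx i j) = 0"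
  have "\<forall>j<m. crd ((\<Sum>i<m. c i * alpha i) * alpha j) 0 = 0" using fmap_comb[OF cK] z by simp
  hence "(\<Sum>i<m. c i * alpha i) = 0" by (rule kernel[OF comb_L[OF cK]])
  thus ?thesis by (rule BI[OF cK])
qed

lemma injAll: "\<forall>j<m. (\<Sum>i<m. c i * Mx i j) = 0 \<Longrightarrow> \<forall>i<m. c i = 0"
proof -
  assume z: "\<forall>j<m. (\<Sum>i<m. c i * Mx i j) = 0"
  define S where "S = {(\<lambda>i. Mx i j) | j. j < m}"
  have sol: "\<forall>r\<in>S. (\<Sum>i<m. c i * r i) = 0" using z unfolding S_def by auto
  show ?thesis
  proof (rule descent[of K S m, OF _ _ _ sol])
    fix x assume "\<forall>s\<in>Gal_cl K. s x = x" thus "x \<in> K" by (rule fixK)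
  next
    fix r s assume r: "r \<in> S" and s: "s \<in> Gal_cl K"
    have "(\<lambda>i. s (r i)) = r" using r GalD(4)[OF s MxK] unfolding S_def by auto
    thus "(\<lambda>i. s (r i)) \<in> S" using r by simp
  next
    fix c assume cK: "\<forall>j<m. c j \<in> K" and sol': "\<forall>r\<in>S. (\<Sum>j<m. c j * r j) = 0"
    have "\<forall>j<m. (\<Sum>i<m. c i * Mx i j) = 0" using sol' unfolding S_def by auto
    thus "\<forall>j<m. c j = 0" by (rule injK[OF cK])
  qed
qed

lemma surj_K:
  assumes tK: "\<forall>j<m. t j \<in> K"
  shows "\<exists>c. (\<forall>i<m. c i \<in> K) \<and> (\<forall>j<m. (\<Sum>i<m. c i * Mx i j) = t j)"
proof -
  obtain c where c: "\<forall>j<m. (\<Sum>i<m. c i * Mx i j) = t j"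
    using solve_square[where M = Mx and m = m and t = t] injAll by blast
  have "c i \<in> K" if i: "i < m" for i
  proof (rule fixK, rule ballI)
    fix s assume s: "s \<in> Gal_cl K"
    define d where "d i = s (c i) - c i" for i
    have "\<forall>j<m. (\<Sum>i<m. d i * Mx i j) = 0"
    proof (intro allI impI)
      fix j assume j: "j < m"
      have "(\<Sum>i<m. s (c i) * Mx i j) = s (\<Sum>i<m. c i * Mx i j)"
        by (simp add: Gal_sum[OF s] Gal_mult[OF s] GalD(4)[OF s MxK])
      also have "\<dots> = t j" using c j GalD(4)[OF s] tK by simp
      finally have "(\<Sum>i<m. s (c i) * Mx i j) = t j" .
      thus "(\<Sum>i<m. d i * Mx i j) = 0" using c j unfolding d_def by (simp add: algebra_simps sum_subtractf)
    qed
    hence "d i = 0" using injAll i by blast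
    thus "s (c i) = c i" unfolding d_def by simp
  qed
  thus ?thesis using c by blast
qed

lemma fmap_bij: "bij_betw fmap L (vcarrier (Kn_phi K m (phi_of m beta lc)))"
proof -
  define C where "C = {v. (\<forall>i. v i \<in> K) \<and> (\<forall>i\<ge>m. v i = 0)}"
  have vC: "vcarrier (Kn_phi K m (phi_of m beta lc)) = C" unfolding Kn_phi_def C_def by simp
  have inj: "inj_on fmap L"
  proof (rule inj_onI)
    fix u v assume u: "u \<in> L" and v: "v \<in> L" and eq: "fmap u = fmap v"
    have "\<forall>j<m. crd ((u - v) * alpha j) 0 = 0"
    proof (intro allI impI)
      fix j assume j: "j < m"
      have "crd (u * alpha j) 0 = crd (v * alpha j) 0" using fun_cong[OF eq, of j] j unfolding fmap_def by simp
      moreover have "(u - v) * alpha j = u * alpha j - v * alpha j" by (simp add: algebra_simps)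
      ultimately show "crd ((u - v) * alpha j) 0 = 0"
        using crd_diff[OF uaL[OF u j] uaL[OF v j] m_pos] by simp
    qed
    hence "u - v = 0" by (rule kernel[OF sf_diff[OF L_sf u v]])
    thus "u = v" by simp
  qed
  have sub: "fmap ` L \<subseteq> C"
  proof
    fix x assume "x \<in> fmap ` L"
    then obtain u where u: "u \<in> L" "x = fmap u" by blast
    have "\<forall>i. x i \<in> K" unfolding u(2) fmap_def using crdK[OF uaL[OF u(1)] m_pos] sf_0[OF K] by auto
    moreover have "\<forall>i\<ge>m. x i = 0" unfolding u(2) fmap_def by simp
    ultimately show "x \<in> C" unfolding C_def by blast
  qed
  have sup: "C \<subseteq> fmap ` L"
  proof
    fix t assume "t \<in> C"
    hence tK: "\<forall>j<m. t j \<in> K" and t0: "\<forall>i\<ge>m. t i = 0" unfolding C_def by auto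
    obtain c where c: "\<forall>i<m. c i \<in> K" "\<forall>j<m. (\<Sum>i<m. c i * Mx i j) = t j" using surj_K[OF tK] by blast
    define u where "u = (\<Sum>i<m. c i * alpha i)"
    have uL: "u \<in> L" unfolding u_def by (rule comb_L[OF c(1)])
    have "fmap u = t"
    proof
      fix j show "fmap u j = t j"
      proof (cases "j < m")
        case True thus ?thesis unfolding fmap_def u_def using fmap_comb[OF c(1) True] c(2) by simp
      next
        case False thus ?thesis unfolding fmap_def using t0 by simp
      qed
    qed
    thus "t \<in> fmap ` L" using uL by blast
  qed
  show ?thesis unfolding bij_betw_def vC using inj sub sup by blast
qed

lemma rhs_expand:
  assumes v: "v \<in> L" and a: "a \<in> K" and j: "j < m"
  shows "v * lam a * alpha j = (\<Sum>i<m. (\<Sum>k<m. beta j k i * lc k a) * (v * alpha i))"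
proof -
  have la: "lam a = (\<Sum>k<m. lc k a * alpha k)" using lcH a by blast
  have "v * lam a * alpha j = (\<Sum>k<m. lc k a * (v * (alpha j * alpha k)))"
    unfolding la by (simp add: sum_distrib_left sum_distrib_right mult_ac)
  also have "\<dots> = (\<Sum>k<m. lc k a * (v * (\<Sum>i<m. beta j k i * alpha i)))"
    by (rule sum.cong[OF refl]) (use betaH j in auto)
  also have "\<dots> = (\<Sum>k<m. \<Sum>i<m. (beta j k i * lc k a) * (v * alpha i))"
    by (simp add: sum_distrib_left mult_ac)
  also have "\<dots> = (\<Sum>i<m. \<Sum>k<m. (beta j k i * lc k a) * (v * alpha i))"
    by (rule sum.swap)
  also have "\<dots> = (\<Sum>i<m. (\<Sum>k<m. beta j k i * lc k a) * (v * alpha i))"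
    by (simp add: sum_distrib_right)
  finally show ?thesis .
qed

lemma fmap_right:
  assumes v: "v \<in> L" and a: "a \<in> K"
  shows "fmap (v * lam a) = rsmul (Kn_phi K m (phi_of m beta lc)) (fmap v) a"
proof
  fix j
  show "fmap (v * lam a) j = rsmul (Kn_phi K m (phi_of m beta lc)) (fmap v) a j"
  proof (cases "j < m")
    case False thus ?thesis unfolding fmap_def Kn_phi_def by simp
  next
    case True
    have coefK: "(\<Sum>k<m. beta j k i * lc k a) \<in> K" if i: "i < m" for i
    proof (rule sf_sum[OF K])
      fix k assume "k \<in> {..<m}"
      hence k: "k < m" by simp
      have "beta j k i \<in> K" using betaH True k i by blast
      moreover have "lc k a \<in> K" using lcH a k by blast
      ultimately show "beta j k i * lc k a \<in> K" by (rule sf_mult[OF K])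
    qed
    have "crd (v * lam a * alpha j) 0 = crd (\<Sum>i<m. (\<Sum>k<m. beta j k i * lc k a) * (v * alpha i)) 0"
      using rhs_expand[OF v a True] by simp
    also have "\<dots> = (\<Sum>i<m. (\<Sum>k<m. beta j k i * lc k a) * crd (v * alpha i) 0)"
      by (rule crd_comb) (use coefK uaL[OF v] m_pos in auto)
    also have "\<dots> = (\<Sum>i<m. fmap v i * phi_of m beta lc i j a)"
      by (rule sum.cong[OF refl]) (simp add: fmap_def phi_of_def mult.commute)
    finally show ?thesis unfolding Kn_phi_def using True by (simp add: fmap_def)
  qed
qed

lemma V_iso: "iso_tsvs K (V_lam K lam) (Kn_phi K m (phi_of m beta lc))"
  unfolding iso_tsvs_def
proof (intro exI conjI ballI)
  have vc: "vcarrier (V_lam K lam) = L" unfolding V_lam_def by simp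
  show "bij_betw fmap (vcarrier (V_lam K lam)) (vcarrier (Kn_phi K m (phi_of m beta lc)))"
    unfolding vc by (rule fmap_bij)
next
  fix v w assume "v \<in> vcarrier (V_lam K lam)" "w \<in> vcarrier (V_lam K lam)"
  hence v: "v \<in> L" and w: "w \<in> L" unfolding V_lam_def by auto
  show "fmap (v + w) = fmap v + fmap w"
  proof
    fix j show "fmap (v + w) j = (fmap v + fmap w) j"
    proof (cases "j < m")
      case True
      have "(v + w) * alpha j = v * alpha j + w * alpha j" by (simp add: algebra_simps)
      thus ?thesis unfolding fmap_def using True crd_add[OF uaL[OF v True] uaL[OF w True] m_pos] by simp
    qed (simp add: fmap_def)
  qed
next
  fix a v assume a: "a \<in> K" and "v \<in> vcarrier (V_lam K lam)"
  hence v: "v \<in> L" unfolding V_lam_def by auto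
  show "fmap (lsmul (V_lam K lam) a v) = lsmul (Kn_phi K m (phi_of m beta lc)) a (fmap v)"
  proof -
    have "fmap (a * v) = (\<lambda>i. a * fmap v i)"
    proof
      fix j show "fmap (a * v) j = a * fmap v j"
      proof (cases "j < m")
        case True
        show ?thesis unfolding fmap_def using True crd_smult[OF a uaL[OF v True] m_pos] by (simp add: mult.assoc)
      qed (simp add: fmap_def)
    qed
    thus ?thesis unfolding V_lam_def Kn_phi_def by simp
  qed
  show "fmap (rsmul (V_lam K lam) v a) = rsmul (Kn_phi K m (phi_of m beta lc)) (fmap v) a"
    unfolding V_lam_def using fmap_right[OF v a] by simp
qed

end

context setting
begin

lemma lam_inj: "a \<in> K \<Longrightarrow> b \<in> K \<Longrightarrow> lam a = lam b \<Longrightarrow> a = b"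
  by (rule hom_inj[OF K lam_hom])

lemma basis_eq: "is_basis K (\<lambda>a v. v * lam a) L B = is_basis (lam ` K) (*) L B"
proof -
  define li where "li y = inv_into K lam y" for y
  have li: "li y \<in> K" "lam (li y) = y" if "y \<in> lam ` K" for y
    using that unfolding li_def by (auto simp: inv_into_into f_inv_into_f)
  have lam0: "lam 0 = 0" by (rule hom_0[OF lam_hom])
  have ind: "(\<forall>c. (\<forall>b\<in>B. c b \<in> K) \<longrightarrow> (\<Sum>b\<in>B. b * lam (c b)) = 0 \<longrightarrow> (\<forall>b\<in>B. c b = 0)) \<longleftrightarrow>
      (\<forall>c. (\<forall>b\<in>B. c b \<in> lam ` K) \<longrightarrow> (\<Sum>b\<in>B. c b * b) = 0 \<longrightarrow> (\<forall>b\<in>B. c b = 0))"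
  proof
    assume A: "\<forall>c. (\<forall>b\<in>B. c b \<in> K) \<longrightarrow> (\<Sum>b\<in>B. b * lam (c b)) = 0 \<longrightarrow> (\<forall>b\<in>B. c b = 0)"
    show "\<forall>c. (\<forall>b\<in>B. c b \<in> lam ` K) \<longrightarrow> (\<Sum>b\<in>B. c b * b) = 0 \<longrightarrow> (\<forall>b\<in>B. c b = 0)"
    proof (intro allI impI ballI)
      fix c b assume c: "\<forall>b\<in>B. c b \<in> lam ` K" and s: "(\<Sum>b\<in>B. c b * b) = 0" and b: "b \<in> B"
      have e: "(\<Sum>b\<in>B. b * lam (li (c b))) = (\<Sum>b\<in>B. c b * b)"
        by (rule sum.cong[OF refl]) (use c li in \<open>auto simp: mult.commute\<close>)
      have lk: "\<forall>b\<in>B. li (c b) \<in> K" using c li by auto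
      have "\<forall>b\<in>B. li (c b) = 0" using spec[OF A, of "\<lambda>b. li (c b)"] lk e s by simp
      hence "lam (li (c b)) = 0" using b lam0 by simp
      thus "c b = 0" using li c b by auto
    qed
  next
    assume A: "\<forall>c. (\<forall>b\<in>B. c b \<in> lam ` K) \<longrightarrow> (\<Sum>b\<in>B. c b * b) = 0 \<longrightarrow> (\<forall>b\<in>B. c b = 0)"
    show "\<forall>c. (\<forall>b\<in>B. c b \<in> K) \<longrightarrow> (\<Sum>b\<in>B. b * lam (c b)) = 0 \<longrightarrow> (\<forall>b\<in>B. c b = 0)"
    proof (intro allI impI ballI)
      fix c b assume c: "\<forall>b\<in>B. c b \<in> K" and s: "(\<Sum>b\<in>B. b * lam (c b)) = 0" and b: "b \<in> B"
      have h1: "\<forall>b\<in>B. lam (c b) \<in> lam ` K" using c by auto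
      have h2: "(\<Sum>b\<in>B. lam (c b) * b) = 0" using s by (simp add: mult.commute)
      have "\<forall>b\<in>B. lam (c b) = 0" using spec[OF A, of "\<lambda>b. lam (c b)"] h1 h2 by simp
      hence "lam (c b) = lam 0" using b lam0 by simp
      thus "c b = 0" using lam_inj c b sf_0[OF K] by blast
    qed
  qed
  have sp: "(\<forall>v\<in>L. \<exists>c. (\<forall>b\<in>B. c b \<in> K) \<and> v = (\<Sum>b\<in>B. b * lam (c b))) \<longleftrightarrow>
      (\<forall>v\<in>L. \<exists>c. (\<forall>b\<in>B. c b \<in> lam ` K) \<and> v = (\<Sum>b\<in>B. c b * b))"
  proof
    assume A: "\<forall>v\<in>L. \<exists>c. (\<forall>b\<in>B. c b \<in> K) \<and> v = (\<Sum>b\<in>B. b * lam (c b))"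
    show "\<forall>v\<in>L. \<exists>c. (\<forall>b\<in>B. c b \<in> lam ` K) \<and> v = (\<Sum>b\<in>B. c b * b)"
    proof
      fix v assume "v \<in> L"
      then obtain c where c: "\<forall>b\<in>B. c b \<in> K" "v = (\<Sum>b\<in>B. b * lam (c b))" using A by blast
      have "\<forall>b\<in>B. lam (c b) \<in> lam ` K" using c(1) by auto
      moreover have "v = (\<Sum>b\<in>B. lam (c b) * b)" using c(2) by (simp add: mult.commute)
      ultimately show "\<exists>c. (\<forall>b\<in>B. c b \<in> lam ` K) \<and> v = (\<Sum>b\<in>B. c b * b)"
        by (intro exI[of _ "\<lambda>b. lam (c b)"]) simp
    qed
  next
    assume A: "\<forall>v\<in>L. \<exists>c. (\<forall>b\<in>B. c b \<in> lam ` K) \<and> v = (\<Sum>b\<in>B. c b * b)"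
    show "\<forall>v\<in>L. \<exists>c. (\<forall>b\<in>B. c b \<in> K) \<and> v = (\<Sum>b\<in>B. b * lam (c b))"
    proof
      fix v assume "v \<in> L"
      then obtain c where c: "\<forall>b\<in>B. c b \<in> lam ` K" "v = (\<Sum>b\<in>B. c b * b)" using A by blast
      have "\<forall>b\<in>B. li (c b) \<in> K" using c(1) li by auto
      moreover have "v = (\<Sum>b\<in>B. b * lam (li (c b)))" unfolding c(2)
        by (rule sum.cong[OF refl]) (use c(1) li in \<open>auto simp: mult.commute\<close>)
      ultimately show "\<exists>c. (\<forall>b\<in>B. c b \<in> K) \<and> v = (\<Sum>b\<in>B. b * lam (c b))"
        by (intro exI[of _ "\<lambda>b. li (c b)"]) simp
    qed
  qed
  show ?thesis unfolding is_basis_def using ind sp by simp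
qed

lemma right_dim_eq: "right_dim K (V_lam K lam) = field_degree L (lam ` K)"
proof -
  have e: "is_basis K (\<lambda>a v. v * lam a) L = is_basis (lam ` K) (*) L"
    by (rule ext) (rule basis_eq)
  have "right_dim K (V_lam K lam) = vs_dim K (\<lambda>a v. v * lam a) L" unfolding right_dim_def V_lam_def by simp
  also have "\<dots> = vs_dim (lam ` K) (*) L" unfolding vs_dim_def e ..
  also have "\<dots> = field_degree L (lam ` K)" unfolding field_degree_def ..
  finally show ?thesis .
qed

lemma left_dim_eq: "left_dim K (V_lam K lam) = field_degree L K"
  unfolding left_dim_def field_degree_def V_lam_def by simp

lemma main:
  "m = n \<and> simple_tsvs k K (V_lam K lam)
    \<and> iso_tsvs K (V_lam K lam) (Kn_phi K m (phi_of m beta lc))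
    \<and> left_dim K (V_lam K lam) = field_degree (composite K lam) K
    \<and> right_dim K (V_lam K lam) = field_degree (composite K lam) (lam ` K)"
  using m_eq_n V_simple V_iso left_dim_eq right_dim_eq by simp

end

theorem proposition2p3:
  fixes K k :: "'a::field set" and lam :: "'a \<Rightarrow> 'a" and n m :: nat
    and alpha :: "nat \<Rightarrow> 'a" and lc :: "nat \<Rightarrow> 'a \<Rightarrow> 'a" and beta :: "nat \<Rightarrow> nat \<Rightarrow> nat \<Rightarrow> 'a"
  assumes "is_alg_closure_of K"
    and "perfect_subfield K"
    and "is_subfield k" and "k \<subseteq> K"
    and "is_emb k K lam"
    and "finite (emb_orbit K lam)" and "card (emb_orbit K lam) = n"
    and "inj_on alpha {..<m}" and "is_basis K (*) (composite K lam) (alpha ` {..<m})"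
    and "\<forall>x\<in>K. (\<forall>i<m. lc i x \<in> K) \<and> lam x = (\<Sum>i<m. lc i x * alpha i)"
    and "\<forall>i<m. \<forall>j<m. (\<forall>l<m. beta i j l \<in> K) \<and> alpha i * alpha j = (\<Sum>l<m. beta i j l * alpha l)"
  shows "m = n \<and> simple_tsvs k K (V_lam K lam)
    \<and> iso_tsvs K (V_lam K lam) (Kn_phi K m (phi_of m beta lc))
    \<and> left_dim K (V_lam K lam) = field_degree (composite K lam) K
    \<and> right_dim K (V_lam K lam) = field_degree (composite K lam) (lam ` K)"
proof -
  interpret setting K k lam n m alpha lc beta
    using assms by unfold_locales
  show ?thesis by (rule main)
qed

end
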